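(* Let $1\le k\le e-1$. For any two distinct $x,y\in X$, the least upper bound $x\vee y$ of $x$ and $y$ in the poset $([1,\lambda^k],\preceq)$ exists, and it is also the least upper bound of $x,y$ in $([1,\lambda^k],\preceq_r)$. Explicitly (indices of $t$ taken in $\mathbb{Z}/e\mathbb{Z}$): $t_i\vee t_j=t_kt_0=t_it_{i-k}=t_jt_{j-k}$ for $i\neq j$; $t_i\vee s_3=t_is_3t_i=s_3t_is_3$; $t_i\vee s_j=t_is_j=s_jt_i$ for $4\le j\le n$; $s_i\vee s_{i+1}=s_is_{i+1}s_i=s_{i+1}s_is_{i+1}$ for $3\le i\le n-1$; $s_i\vee s_j=s_is_j=s_js_i$ for $3\le i,j\le n$, $|i-j|>1$.
   Context: Let $e\ge 2$, $n\ge 2$, $\zeta_e=e^{2\pi i/e}$. $G(e,e,n)$ is the group of $n\times n$ monomial matrices with nonzero entries $e$-th roots of unity whose product is $1$. For $i\in\mathbb{Z}/e\mathbb{Z}$, $t_i$ is the matrix with $(1,2)$ entry $\zeta_e^{-i}$, $(2,1)$ entry $\zeta_e^{i}$, $(j,j)$ entry $1$ for $3\le j\le n$, other entries $0$; for $3\le j\le n$, $s_j$ is the permutation matrix of the transposition $(j-1\ j)$. $X=\{t_0,\dots,t_{e-1},s_3,\dots,s_n\}$ and $\ell$ is the word length with respect to $X$. For $u,w\in G(e,e,n)$ write $u\preceq w$ if $\ell(u)+\ell(u^{-1}w)=\ell(w)$, and $u\preceq_r w$ if $\ell(wu^{-1})+\ell(u)=\ell(w)$. $[1,g]=\{w: w\preceq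 g\}$. $\lambda=\mathrm{diag}(\zeta_e^{-(n-1)},\zeta_e,\dots,\zeta_e)$. *)

theory Defs
  imports Complex_Main "Jordan_Normal_Form.Matrix"
begin

text \<open>Matrices are n x n complex matrices (JNF type), indices 0-based:
  paper row/column a (1-based) is index a-1 here.\<close>

definition zeta_pow :: "nat \<Rightarrow> int \<Rightarrow> complex" where
  "zeta_pow e m = cis (2 * pi * of_int m / of_nat e)"

definition Geen :: "nat \<Rightarrow> nat \<Rightarrow> complex mat set" where
  "Geen e n = {A. A \<in> carrier_mat n n
      \<and> (\<forall>a<n. \<exists>!b. b < n \<and> A $$ (a,b) \<noteq> 0)
      \<and> (\<forall>b<n. \<exists>!a. a < n \<and> A $$ (a,b) \<noteq> 0)
      \<and> (\<forall>a<n. \<forall>b<n. A $$ (a,b) \<noteq> 0 \<longrightarrow> (A $$ (a,b)) ^ e = 1)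
      \<and> (\<Prod>p\<in>{(a,b). a < n \<and> b < n \<and> A $$ (a,b) \<noteq> 0}. A $$ p) = 1}"

text \<open>t_i (index i in Z, only its class mod e matters).\<close>
definition tgen :: "nat \<Rightarrow> nat \<Rightarrow> int \<Rightarrow> complex mat" where
  "tgen e n i = mat n n (\<lambda>(a,b).
     if a = 0 \<and> b = 1 then zeta_pow e (- i)
     else if a = 1 \<and> b = 0 then zeta_pow e i
     else if a = b \<and> 2 \<le> a then 1 else 0)"

text \<open>s_j for 3 <= j <= n: permutation matrix of the transposition (j-1 j)
  (1-based), i.e. swapping 0-based indices j-2 and j-1.\<close>
definition sgen :: "nat \<Rightarrow> nat \<Rightarrow> complex mat" where
  "sgen n j = mat n n (\<lambda>(a,b).
     if (a = j - 2 \<and> b = j - 1) \<or> (a = j - 1 \<and> b = j - 2) then 1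
     else if a = b \<and> a \<noteq> j - 2 \<and> a \<noteq> j - 1 then 1 else 0)"

definition Xgen :: "nat \<Rightarrow> nat \<Rightarrow> complex mat set" where
  "Xgen e n = {tgen e n (int i) | i. i < e} \<union> {sgen n j | j. 3 \<le> j \<and> j \<le> n}"

definition word_prod :: "nat \<Rightarrow> complex mat list \<Rightarrow> complex mat" where
  "word_prod n ws = foldr (*) ws (1\<^sub>m n)"

definition wlen :: "nat \<Rightarrow> nat \<Rightarrow> complex mat \<Rightarrow> nat" where
  "wlen e n w = (LEAST m. \<exists>ws. set ws \<subseteq> Xgen e n \<and> length ws = m \<and> word_prod n ws = w)"

definition ginv :: "nat \<Rightarrow> nat \<Rightarrow> complex mat \<Rightarrow> complex mat" where
  "ginv e n u = (THE v. v \<in> Geen e n \<and> u * v = 1\<^sub>m n)"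

definition prefix_le :: "nat \<Rightarrow> nat \<Rightarrow> complex mat \<Rightarrow> complex mat \<Rightarrow> bool" where
  "prefix_le e n u w \<longleftrightarrow> u \<in> Geen e n \<and> w \<in> Geen e n \<and>
     wlen e n u + wlen e n (ginv e n u * w) = wlen e n w"

definition suffix_le :: "nat \<Rightarrow> nat \<Rightarrow> complex mat \<Rightarrow> complex mat \<Rightarrow> bool" where
  "suffix_le e n u w \<longleftrightarrow> u \<in> Geen e n \<and> w \<in> Geen e n \<and>
     wlen e n (w * ginv e n u) + wlen e n u = wlen e n w"

definition interval :: "nat \<Rightarrow> nat \<Rightarrow> complex mat \<Rightarrow> complex mat set" where
  "interval e n g = {w \<in> Geen e n. prefix_le e n w g}"

definition lam :: "nat \<Rightarrow> nat \<Rightarrow> complex mat" where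
  "lam e n = mat n n (\<lambda>(a,b). if a = b then
      (if a = 0 then zeta_pow e (- (int n - 1)) else zeta_pow e 1) else 0)"

definition is_lub :: "('a \<Rightarrow> 'a \<Rightarrow> bool) \<Rightarrow> 'a set \<Rightarrow> 'a \<Rightarrow> 'a \<Rightarrow> 'a \<Rightarrow> bool" where
  "is_lub R S x y z \<longleftrightarrow> z \<in> S \<and> R x z \<and> R y z \<and>
     (\<forall>w\<in>S. R x w \<and> R y w \<longrightarrow> R z w)"

definition lub_both :: "nat \<Rightarrow> nat \<Rightarrow> nat \<Rightarrow> complex mat \<Rightarrow> complex mat \<Rightarrow> complex mat \<Rightarrow> bool" where
  "lub_both e n k x y z \<longleftrightarrow>
     is_lub (prefix_le e n) (interval e n (lam e n ^\<^sub>m k)) x y z \<and>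
     is_lub (suffix_le e n) (interval e n (lam e n ^\<^sub>m k)) x y z"

end

theory Submission
  imports Defs
begin



lemma zeta_add: "zeta_pow e a * zeta_pow e b = zeta_pow e (a+b)"
  unfolding zeta_pow_def cis_mult by (simp add: add_divide_distrib distrib_left)

lemma zeta_nz[simp]: "zeta_pow e a \<noteq> 0"
  by (simp add: zeta_pow_def)

lemma zeta_0[simp]: "zeta_pow e 0 = 1"
  by (simp add: zeta_pow_def)

lemma zeta_mult_e: assumes "e > 0" shows "zeta_pow e (int e * q) = 1"
proof -
  have "2 * pi * of_int (int e * q) / of_nat e = 2 * pi * real_of_int q"
    using assms by simp
  then show ?thesis unfolding zeta_pow_def by simp
qed

lemma zeta_mod: assumes "e > 0" shows "zeta_pow e a = zeta_pow e (a mod int e)"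
proof -
  have "a = a mod int e + int e * (a div int e)" by simp
  then have "zeta_pow e a = zeta_pow e (a mod int e) * zeta_pow e (int e * (a div int e))"
    by (metis zeta_add)
  then show ?thesis using zeta_mult_e[OF assms] by simp
qed

lemma zeta_eq_iff: assumes "e > 0"
  shows "zeta_pow e a = zeta_pow e b \<longleftrightarrow> a mod int e = b mod int e"
proof
  assume h: "zeta_pow e a = zeta_pow e b"
  define a' where "a' = nat (a mod int e)"
  define b' where "b' = nat (b mod int e)"
  have a'l: "a' < e" "int a' = a mod int e" using assms by (auto simp: a'_def nat_less_iff)
  have b'l: "b' < e" "int b' = b mod int e" using assms by (auto simp: b'_def nat_less_iff)
  have inj: "inj_on (\<lambda>k. cis (2 * pi * real k / real e)) {..<e}"
    using bij_betw_roots_unity[OF assms] by (simp add: bij_betw_def)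
  have "zeta_pow e (int a') = zeta_pow e (int b')"
    using h zeta_mod[OF assms, of a] zeta_mod[OF assms, of b] a'l b'l by simp
  then have "cis (2 * pi * real a' / real e) = cis (2 * pi * real b' / real e)"
    unfolding zeta_pow_def by simp
  then have "a' = b'" using inj a'l b'l by (auto dest: inj_onD)
  then show "a mod int e = b mod int e" using a'l b'l by simp
next
  assume "a mod int e = b mod int e"
  then show "zeta_pow e a = zeta_pow e b"
    using zeta_mod[OF assms, of a] zeta_mod[OF assms, of b] by simp
qed

lemma zeta_eq_1_iff: assumes "e > 0" shows "zeta_pow e a = 1 \<longleftrightarrow> int e dvd a"
  using zeta_eq_iff[OF assms, of a 0] by (simp add: dvd_eq_mod_eq_0)

lemma root_is_zeta: assumes "e > 0" "z ^ e = 1" shows "\<exists>m. z = zeta_pow e m"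
proof -
  have "z \<in> (\<lambda>k. cis (2 * pi * real k / real e)) ` {..<e}"
    using bij_betw_roots_unity[OF assms(1)] assms(2) by (auto simp: bij_betw_def)
  then obtain k where "z = cis (2 * pi * real k / real e)" by auto
  then have "z = zeta_pow e (int k)" unfolding zeta_pow_def by simp
  then show ?thesis by blast
qed

lemma zeta_pow_e: assumes "e > 0" shows "(zeta_pow e m) ^ e = 1"
proof -
  have "(zeta_pow e m) ^ e = cis (real e * (2 * pi * of_int m / of_nat e))"
    unfolding zeta_pow_def DeMoivre by simp
  also have "real e * (2 * pi * of_int m / of_nat e) = 2 * pi * of_int m" using assms by simp
  finally show ?thesis by simp
qed

lemma zeta_sum: "(\<Prod>a<(n::nat). zeta_pow e (x a)) = zeta_pow e (\<Sum>a<n. x a)"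
  by (induction n) (auto simp: zeta_add)



definition mmat :: "nat \<Rightarrow> nat \<Rightarrow> (nat \<Rightarrow> nat) \<Rightarrow> (nat \<Rightarrow> int) \<Rightarrow> complex mat" where
  "mmat e n p x = mat n n (\<lambda>(a,b). if b = p a then zeta_pow e (x a) else 0)"

lemma mmat_carrier[simp]: "mmat e n p x \<in> carrier_mat n n"
  by (simp add: mmat_def)

lemma mmat_dims[simp]: "dim_row (mmat e n p x) = n" "dim_col (mmat e n p x) = n"
  by (simp_all add: mmat_def)

lemma mmat_index: "a < n \<Longrightarrow> b < n \<Longrightarrow> mmat e n p x $$ (a,b) = (if b = p a then zeta_pow e (x a) else 0)"
  by (simp add: mmat_def)

lemma mmat_mult: assumes "\<forall>a<n. p a < n"
  shows "mmat e n p x * mmat e n q y = mmat e n (q \<circ> p) (\<lambda>a. x a + y (p a))"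
proof (rule eq_matI)
  fix a c assume ac: "a < dim_row (mmat e n (q \<circ> p) (\<lambda>a. x a + y (p a)))"
    "c < dim_col (mmat e n (q \<circ> p) (\<lambda>a. x a + y (p a)))"
  then have a: "a < n" and c: "c < n" by auto
  have "(mmat e n p x * mmat e n q y) $$ (a,c) =
      (\<Sum>d\<in>{0..<n}. mmat e n p x $$ (a,d) * mmat e n q y $$ (d,c))"
    using a c by (simp add: scalar_prod_def)
  also have "\<dots> = (\<Sum>d\<in>{0..<n}. if d = p a then zeta_pow e (x a) * mmat e n q y $$ (d,c) else 0)"
    by (rule sum.cong) (auto simp: mmat_index a)
  also have "\<dots> = zeta_pow e (x a) * mmat e n q y $$ (p a,c)"
    using assms a by (simp add: sum.delta')
  also have "\<dots> = mmat e n (q \<circ> p) (\<lambda>a. x a + y (p a)) $$ (a,c)"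
    using assms a c by (simp add: mmat_index zeta_add)
  finally show "(mmat e n p x * mmat e n q y) $$ (a,c) = mmat e n (q \<circ> p) (\<lambda>a. x a + y (p a)) $$ (a,c)" .
qed auto

lemma mmat_eq_iff: assumes "e > 0" "\<forall>a<n. p a < n" "\<forall>a<n. q a < n"
  shows "mmat e n p x = mmat e n q y \<longleftrightarrow> (\<forall>a<n. p a = q a \<and> x a mod int e = y a mod int e)"
proof
  assume h: "mmat e n p x = mmat e n q y"
  show "\<forall>a<n. p a = q a \<and> x a mod int e = y a mod int e"
  proof (intro allI impI)
    fix a assume a: "a < n"
    have "mmat e n p x $$ (a, p a) = mmat e n q y $$ (a, p a)" using h by simp
    then have "zeta_pow e (x a) = (if p a = q a then zeta_pow e (y a) else 0)"
      using a assms by (simp add: mmat_index)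
    then show "p a = q a \<and> x a mod int e = y a mod int e"
      using zeta_eq_iff[OF assms(1)] by (auto split: if_splits)
  qed
next
  assume h: "\<forall>a<n. p a = q a \<and> x a mod int e = y a mod int e"
  show "mmat e n p x = mmat e n q y"
    by (rule eq_matI) (use h zeta_eq_iff[OF assms(1)] in \<open>auto simp: mmat_index\<close>)
qed



lemma mmat_Geen: assumes "e > 0" "bij_betw p {..<n} {..<n}" "int e dvd (\<Sum>a<n. x a)"
  shows "mmat e n p x \<in> Geen e n"
proof -
  let ?A = "mmat e n p x"
  have pn: "\<And>a. a < n \<Longrightarrow> p a < n" using assms(2) by (auto simp: bij_betw_def)
  have row: "\<forall>a<n. \<exists>!b. b < n \<and> ?A $$ (a,b) \<noteq> 0"
  proof (intro allI impI)
    fix a assume a: "a < n"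
    show "\<exists>!b. b < n \<and> ?A $$ (a,b) \<noteq> 0"
    proof (rule ex1I[of _ "p a"])
      show "p a < n \<and> ?A $$ (a, p a) \<noteq> 0" using a pn by (simp add: mmat_index)
      fix b assume "b < n \<and> ?A $$ (a,b) \<noteq> 0"
      then show "b = p a" using a by (auto simp: mmat_index split: if_splits)
    qed
  qed
  have col: "\<forall>b<n. \<exists>!a. a < n \<and> ?A $$ (a,b) \<noteq> 0"
  proof (intro allI impI)
    fix b assume b: "b < n"
    then obtain a where a: "a < n" "p a = b" using assms(2) by (metis bij_betw_imp_surj_on imageE lessThan_iff)
    show "\<exists>!a. a < n \<and> ?A $$ (a,b) \<noteq> 0"
    proof (rule ex1I[of _ a])
      show "a < n \<and> ?A $$ (a,b) \<noteq> 0" using a b by (simp add: mmat_index)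
      fix a' assume "a' < n \<and> ?A $$ (a',b) \<noteq> 0"
      then have "a' < n" "p a' = b" using b by (auto simp: mmat_index split: if_splits)
      then show "a' = a" using a assms(2) by (auto simp: bij_betw_def inj_on_def)
    qed
  qed
  have roots: "\<forall>a<n. \<forall>b<n. ?A $$ (a,b) \<noteq> 0 \<longrightarrow> (?A $$ (a,b)) ^ e = 1"
    using zeta_pow_e[OF assms(1)] by (auto simp: mmat_index)
  have S: "{(a,b). a < n \<and> b < n \<and> ?A $$ (a,b) \<noteq> 0} = (\<lambda>a. (a, p a)) ` {..<n}"
    using pn by (auto simp: mmat_index split: if_splits)
  have "(\<Prod>q\<in>{(a,b). a < n \<and> b < n \<and> ?A $$ (a,b) \<noteq> 0}. ?A $$ q) =
        (\<Prod>a\<in>{..<n}. ?A $$ (a, p a))"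
    unfolding S by (subst prod.reindex) (auto simp: inj_on_def)
  also have "\<dots> = (\<Prod>a<n. zeta_pow e (x a))"
    by (rule prod.cong) (auto simp: mmat_index pn)
  also have "\<dots> = 1" using zeta_sum zeta_eq_1_iff[OF assms(1)] assms(3) by simp
  finally show ?thesis unfolding Geen_def using row col roots by auto
qed

lemma Geen_mmat: assumes "e > 0" "A \<in> Geen e n"
  shows "\<exists>p x. bij_betw p {..<n} {..<n} \<and> int e dvd (\<Sum>a<n. x a) \<and> A = mmat e n p x"
proof -
  have car: "A \<in> carrier_mat n n"
    and row: "\<forall>a<n. \<exists>!b. b < n \<and> A $$ (a,b) \<noteq> 0"
    and col: "\<forall>b<n. \<exists>!a. a < n \<and> A $$ (a,b) \<noteq> 0"
    and roots: "\<forall>a<n. \<forall>b<n. A $$ (a,b) \<noteq> 0 \<longrightarrow> (A $$ (a,b)) ^ e = 1"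
    and pr: "(\<Prod>q\<in>{(a,b). a < n \<and> b < n \<and> A $$ (a,b) \<noteq> 0}. A $$ q) = 1"
    using assms(2) unfolding Geen_def by auto
  define p where "p a = (THE b. b < n \<and> A $$ (a,b) \<noteq> 0)" for a
  have p1: "p a < n \<and> A $$ (a, p a) \<noteq> 0" if "a < n" for a
    unfolding p_def using theI'[OF row[rule_format, OF that]] .
  have p2: "b = p a" if "a < n" "b < n" "A $$ (a,b) \<noteq> 0" for a b
    using row[rule_format, OF that(1)] p1[OF that(1)] that by blast
  define x where "x a = (SOME m. A $$ (a, p a) = zeta_pow e m)" for a
  have x1: "A $$ (a, p a) = zeta_pow e (x a)" if "a < n" for a
  proof -
    have "\<exists>m. A $$ (a, p a) = zeta_pow e m"
      using root_is_zeta[OF assms(1)] roots p1[OF that] that by blast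
    then show ?thesis unfolding x_def by (rule someI_ex)
  qed
  have Aeq: "A = mmat e n p x"
  proof (rule eq_matI)
    fix a b assume "a < dim_row (mmat e n p x)" "b < dim_col (mmat e n p x)"
    then have ab: "a < n" "b < n" by auto
    show "A $$ (a,b) = mmat e n p x $$ (a,b)"
    proof (cases "b = p a")
      case True then show ?thesis using ab x1[OF ab(1)] by (simp add: mmat_index)
    next
      case False
      then have "A $$ (a,b) = 0" using p2[OF ab] by blast
      then show ?thesis using ab False by (simp add: mmat_index)
    qed
  qed (use car in auto)
  have inj: "inj_on p {..<n}"
  proof (rule inj_onI)
    fix a a' assume "a \<in> {..<n}" "a' \<in> {..<n}" "p a = p a'"
    then have h0: "a < n" "a' < n" "p a = p a'" by auto
    have h1: "p a < n \<and> A $$ (a, p a) \<noteq> 0" using p1[OF h0(1)] .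
    have h2: "A $$ (a', p a) \<noteq> 0" using p1[OF h0(2)] h0(3) by simp
    have h: "p a < n" "A $$ (a, p a) \<noteq> 0" "a < n" "a' < n" "A $$ (a', p a) \<noteq> 0"
      using h0 h1 h2 by auto
    show "a = a'" using col[rule_format, OF h(1)] h(2-5) by blast
  qed
  have sub: "p ` {..<n} \<subseteq> {..<n}" using p1 by auto
  have bij: "bij_betw p {..<n} {..<n}"
    unfolding bij_betw_def using inj endo_inj_surj[OF _ sub inj] by auto
  have S: "{(a,b). a < n \<and> b < n \<and> A $$ (a,b) \<noteq> 0} = (\<lambda>a. (a, p a)) ` {..<n}"
    using p1 p2 by auto
  have "(\<Prod>q\<in>{(a,b). a < n \<and> b < n \<and> A $$ (a,b) \<noteq> 0}. A $$ q) = (\<Prod>a\<in>{..<n}. A $$ (a, p a))"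
    unfolding S by (subst prod.reindex) (auto simp: inj_on_def)
  also have "\<dots> = (\<Prod>a<n. zeta_pow e (x a))" by (rule prod.cong) (auto simp: x1)
  finally have "zeta_pow e (\<Sum>a<n. x a) = 1" using pr zeta_sum by simp
  then have "int e dvd (\<Sum>a<n. x a)" using zeta_eq_1_iff[OF assms(1)] by simp
  then show ?thesis using bij Aeq by blast
qed


definition swp :: "nat \<Rightarrow> nat \<Rightarrow> nat \<Rightarrow> nat" where
  "swp r s a = (if a = r then s else if a = s then r else a)"

definition phi :: "nat \<Rightarrow> nat \<Rightarrow> nat \<Rightarrow> int \<Rightarrow> nat" where
  "phi e u v z = (if v < u then 1 else if int e dvd z then 0 else 2)"

definition Pairs :: "nat \<Rightarrow> (nat \<times> nat) set" where
  "Pairs n = {(a,b). a < b \<and> b < n}"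

definition Fd :: "nat \<Rightarrow> nat \<Rightarrow> (nat \<Rightarrow> nat) \<Rightarrow> (nat \<Rightarrow> int) \<Rightarrow> nat" where
  "Fd e n p x = (\<Sum>(a,b)\<in>Pairs n. phi e (p a) (p b) (x b))"

lemma finite_Pairs[simp]: "finite (Pairs n)"
proof -
  have "Pairs n \<subseteq> {..<n} \<times> {..<n}" by (auto simp: Pairs_def)
  then show ?thesis by (rule finite_subset) auto
qed

lemma swp_inv[simp]: "swp r s (swp r s a) = a"
  by (simp add: swp_def)

lemma swp_lt: "Suc r < n \<Longrightarrow> a < n \<Longrightarrow> swp r (Suc r) a < n"
  by (simp add: swp_def)

lemma swp_bij: assumes "Suc r < n" shows "bij_betw (swp r (Suc r)) {..<n} {..<n}"
proof (rule bij_betwI[where g = "swp r (Suc r)"])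
  show "swp r (Suc r) \<in> {..<n} \<rightarrow> {..<n}" using assms swp_lt by auto
  show "swp r (Suc r) \<in> {..<n} \<rightarrow> {..<n}" using assms swp_lt by auto
qed auto

lemma swp_pairs:
  assumes "Suc r < n" "(a,b) \<in> Pairs n - {(r, Suc r)}"
  shows "(swp r (Suc r) a, swp r (Suc r) b) \<in> Pairs n - {(r, Suc r)}"
  using assms by (auto simp: Pairs_def swp_def)

lemma Fd_step:
  assumes r: "Suc r < n"
    and y0: "\<forall>a b. (a,b) \<in> Pairs n - {(r, Suc r)} \<longrightarrow> y b = 0"
  shows "Fd e n (p \<circ> swp r (Suc r)) (\<lambda>a. y a + x (swp r (Suc r) a)) + phi e (p r) (p (Suc r)) (x (Suc r))
       = Fd e n p x + phi e (p (Suc r)) (p r) (y (Suc r) + x r)"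
proof -
  let ?t = "swp r (Suc r)"
  define c where "c = (\<lambda>(a,b). phi e (p a) (p b) (x b))"
  define c' where "c' = (\<lambda>(a,b). phi e (p (?t a)) (p (?t b)) (y b + x (?t b)))"
  let ?P = "Pairs n - {(r, Suc r)}"
  have mem: "(r, Suc r) \<in> Pairs n" using r by (auto simp: Pairs_def)
  have e1: "Fd e n p x = c (r, Suc r) + sum c ?P"
    unfolding Fd_def c_def[symmetric] using sum.remove[OF finite_Pairs mem] by simp
  have e2: "Fd e n (p \<circ> ?t) (\<lambda>a. y a + x (?t a)) = c' (r, Suc r) + sum c' ?P"
  proof -
    have "Fd e n (p \<circ> ?t) (\<lambda>a. y a + x (?t a)) = sum c' (Pairs n)"
      unfolding Fd_def c'_def by (rule sum.cong) auto
    then show ?thesis using sum.remove[OF finite_Pairs mem] by simp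
  qed
  have e3: "sum c' ?P = sum c ?P"
  proof (rule sum.reindex_bij_witness[where i = "\<lambda>(a,b). (?t a, ?t b)" and j = "\<lambda>(a,b). (?t a, ?t b)"])
    fix q assume q: "q \<in> ?P"
    obtain a b where ab: "q = (a,b)" by (cases q)
    show "(\<lambda>(a,b). (?t a, ?t b)) ((\<lambda>(a,b). (?t a, ?t b)) q) = q" using ab by simp
    show "(\<lambda>(a,b). (?t a, ?t b)) q \<in> ?P" using ab q swp_pairs[OF r] by simp
    have "y b = 0" using y0 q ab by blast
    then show "c ((\<lambda>(a,b). (?t a, ?t b)) q) = c' q" using ab by (simp add: c_def c'_def)
  next
    fix q assume q: "q \<in> ?P"
    obtain a b where ab: "q = (a,b)" by (cases q)
    show "(\<lambda>(a,b). (?t a, ?t b)) ((\<lambda>(a,b). (?t a, ?t b)) q) = q" using ab by simp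
    show "(\<lambda>(a,b). (?t a, ?t b)) q \<in> ?P" using ab q swp_pairs[OF r] by simp
  qed
  have "c' (r, Suc r) = phi e (p (Suc r)) (p r) (y (Suc r) + x r)"
    by (simp add: c'_def swp_def)
  moreover have "c (r, Suc r) = phi e (p r) (p (Suc r)) (x (Suc r))" by (simp add: c_def)
  ultimately show ?thesis using e1 e2 e3 by simp
qed

lemma phi_flip: "u \<noteq> v \<Longrightarrow> phi e u v z \<le> phi e v u z' + 1"
  by (auto simp: phi_def)

lemma Fd_cong: assumes "\<forall>a<n. p a = q a \<and> x a mod int e = y a mod int e"
  shows "Fd e n p x = Fd e n q y"
  unfolding Fd_def
proof (rule sum.cong)
  fix ab assume "ab \<in> Pairs n"
  then obtain a b where ab: "ab = (a,b)" "a < n" "b < n" by (auto simp: Pairs_def)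
  then show "(case ab of (a, b) \<Rightarrow> phi e (p a) (p b) (x b)) = (case ab of (a, b) \<Rightarrow> phi e (q a) (q b) (y b))"
    using assms by (auto simp: phi_def dvd_eq_mod_eq_0)
qed simp

definition tx :: "int \<Rightarrow> nat \<Rightarrow> int" where
  "tx i a = (if a = 0 then - i else if a = 1 then i else 0)"

definition gy :: "nat \<Rightarrow> int \<Rightarrow> nat \<Rightarrow> int" where
  "gy r i = (if r = 0 then tx i else (\<lambda>_. 0))"

lemma tgen_mmat: "2 \<le> n \<Longrightarrow> tgen e n i = mmat e n (swp 0 1) (tx i)"
  by (rule eq_matI) (auto simp: tgen_def mmat_def swp_def tx_def)

lemma sgen_mmat0: "sgen n (r+2) = mmat e n (swp r (Suc r)) (\<lambda>_. 0)"
proof (rule eq_matI)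
  fix a b assume "a < dim_row (mmat e n (swp r (Suc r)) (\<lambda>_. 0))" "b < dim_col (mmat e n (swp r (Suc r)) (\<lambda>_. 0))"
  then have ab: "a < n" "b < n" by simp_all
  have "sgen n (r+2) $$ (a,b) = (if (a = r \<and> b = Suc r) \<or> (a = Suc r \<and> b = r) then 1
     else if a = b \<and> a \<noteq> r \<and> a \<noteq> Suc r then 1 else 0)"
    using ab by (simp add: sgen_def)
  also have "\<dots> = mmat e n (swp r (Suc r)) (\<lambda>_. 0) $$ (a,b)"
    using ab by (cases "a = r"; cases "a = Suc r"; simp add: mmat_index swp_def; fastforce)
  finally show "sgen n (r+2) $$ (a,b) = mmat e n (swp r (Suc r)) (\<lambda>_. 0) $$ (a,b)" .
qed (simp_all add: sgen_def)

lemma sgen_mmat: "3 \<le> j \<Longrightarrow> j \<le> n \<Longrightarrow> sgen n j = mmat e n (swp (j-2) (j-1)) (\<lambda>_. 0)"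
  using sgen_mmat0[of n "j-2" e] by (simp add: Suc_diff_Suc numeral_2_eq_2)

lemma one_mmat: "1\<^sub>m n = mmat e n (\<lambda>a. a) (\<lambda>_. 0)"
  by (rule eq_matI) (auto simp: mmat_def)

lemma lam_mmat: "lam e n = mmat e n (\<lambda>a. a) (\<lambda>a. if a = 0 then - (int n - 1) else 1)"
  by (rule eq_matI) (auto simp: lam_def mmat_def)

lemma lam_pow: "lam e n ^\<^sub>m k = mmat e n (\<lambda>a. a) (\<lambda>a. int k * (if a = 0 then - (int n - 1) else 1))"
proof (induction k)
  case 0
  then show ?case by (simp add: lam_def one_mmat[of n e])
next
  case (Suc k)
  have "lam e n ^\<^sub>m Suc k = lam e n ^\<^sub>m k * lam e n" by simp
  also have "\<dots> = mmat e n (\<lambda>a. a) (\<lambda>a. int k * (if a = 0 then - (int n - 1) else 1) + (if a = 0 then - (int n - 1) else 1))"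
    unfolding Suc.IH by (subst lam_mmat, subst mmat_mult) (auto simp: comp_def)
  also have "\<dots> = mmat e n (\<lambda>a. a) (\<lambda>a. int (Suc k) * (if a = 0 then - (int n - 1) else 1))"
    by (rule arg_cong[where f = "mmat e n (\<lambda>a. a)"]) (auto simp: algebra_simps)
  finally show ?case .
qed

lemma gen_mult: assumes "Suc r < n"
  shows "mmat e n (swp r (Suc r)) y * mmat e n p x = mmat e n (p \<circ> swp r (Suc r)) (\<lambda>a. y a + x (swp r (Suc r) a))"
  using assms by (subst mmat_mult) (auto simp: swp_lt)

lemma gy_zero: "\<forall>a b. (a,b) \<in> Pairs n - {(r, Suc r)} \<longrightarrow> gy r i b = 0"
  by (auto simp: gy_def tx_def Pairs_def)

lemma sum_split0: "0 < n \<Longrightarrow> (\<Sum>a<n. f a) = f 0 + (\<Sum>a\<in>{Suc 0..<n}. f a)"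
proof -
  assume "0 < n"
  then have "{..<n} = insert 0 {Suc 0..<n}" by auto
  then show ?thesis by simp
qed

lemma gy_sum: assumes "Suc r < n" shows "(\<Sum>a<n. gy r i a) = 0"
proof (cases "r = 0")
  case True
  have "(\<Sum>a<n. gy r i a) = (\<Sum>a\<in>{0,1}. gy r i a)"
    by (rule sum.mono_neutral_right) (use assms True in \<open>auto simp: gy_def tx_def\<close>)
  then show ?thesis using True by (simp add: gy_def tx_def)
next
  case False then show ?thesis by (simp add: gy_def)
qed

lemma gy_inv: "gy r i a + gy r i (swp r (Suc r) a) = 0"
  by (auto simp: gy_def tx_def swp_def)

lemma Xgen_cases: assumes "g \<in> Xgen e n" "2 \<le> n"
  shows "\<exists>r i. Suc r < n \<and> g = mmat e n (swp r (Suc r)) (gy r i)"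
proof -
  from assms(1) consider (t) i where "i < e" "g = tgen e n (int i)" | (s) j where "3 \<le> j" "j \<le> n" "g = sgen n j"
    unfolding Xgen_def by blast
  then show ?thesis
  proof cases
    case t
    then show ?thesis using assms(2) tgen_mmat[OF assms(2)]
      by (intro exI[of _ 0] exI[of _ "int i"]) (auto simp: gy_def)
  next
    case s
    have "j - 2 \<noteq> 0" "Suc (j - 2) = j - 1" "Suc (j-2) < n" using s by auto
    then show ?thesis using s sgen_mmat[OF s(1,2), of e]
      by (intro exI[of _ "j - 2"] exI[of _ 0]) (auto simp: gy_def)
  qed
qed

lemma tgen_X: "i < e \<Longrightarrow> tgen e n (int i) \<in> Xgen e n"
  by (auto simp: Xgen_def)

lemma sgen_X: "3 \<le> j \<Longrightarrow> j \<le> n \<Longrightarrow> sgen n j \<in> Xgen e n"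
  by (auto simp: Xgen_def)

lemma gen_data_valid:
  assumes "Suc r < n" "bij_betw p {..<n} {..<n}" "int e dvd (\<Sum>a<n. x a)"
  shows "bij_betw (p \<circ> swp r (Suc r)) {..<n} {..<n}"
    "int e dvd (\<Sum>a<n. gy r i a + x (swp r (Suc r) a))"
proof -
  show "bij_betw (p \<circ> swp r (Suc r)) {..<n} {..<n}"
    using bij_betw_trans[OF swp_bij[OF assms(1)] assms(2)] .
  have "(\<Sum>a<n. x (swp r (Suc r) a)) = (\<Sum>a<n. x a)"
    using sum.reindex_bij_betw[OF swp_bij[OF assms(1)], of x] by simp
  then show "int e dvd (\<Sum>a<n. gy r i a + x (swp r (Suc r) a))"
    using gy_sum[OF assms(1), of i] assms(3) by (simp add: sum.distrib)
qed

lemma Fd_one: "Fd e n (\<lambda>a. a) (\<lambda>_. 0) = 0"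
  unfolding Fd_def by (rule sum.neutral) (auto simp: Pairs_def phi_def)

lemma bij_neq: "bij_betw p {..<n} {..<n} \<Longrightarrow> a < n \<Longrightarrow> b < n \<Longrightarrow> a \<noteq> b \<Longrightarrow> p a \<noteq> p b"
  unfolding bij_betw_def by (meson inj_onD lessThan_iff)

lemma bij_lt: "bij_betw p {..<n} {..<n} \<Longrightarrow> a < n \<Longrightarrow> p a < n"
  unfolding bij_betw_def by auto

lemma word_prod_Cons: "word_prod n (g # ws) = g * word_prod n ws"
  by (simp add: word_prod_def)

lemma word_mmat:
  assumes "e > 0" "2 \<le> n" "set ws \<subseteq> Xgen e n"
  shows "\<exists>p x. bij_betw p {..<n} {..<n} \<and> int e dvd (\<Sum>a<n. x a) \<and>
     word_prod n ws = mmat e n p x \<and> Fd e n p x \<le> length ws"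
  using assms(3)
proof (induction ws)
  case Nil
  show ?case
    by (intro exI[of _ "\<lambda>a. a"] exI[of _ "\<lambda>_. 0"])
      (auto simp: word_prod_def one_mmat[of n e] Fd_one bij_betw_def)
next
  case (Cons g ws)
  then obtain p x where px: "bij_betw p {..<n} {..<n}" "int e dvd (\<Sum>a<n. x a)"
    "word_prod n ws = mmat e n p x" "Fd e n p x \<le> length ws" by auto
  have gX: "g \<in> Xgen e n" using Cons.prems by simp
  obtain r i where ri: "Suc r < n" "g = mmat e n (swp r (Suc r)) (gy r i)"
    using Xgen_cases[OF gX assms(2)] by blast
  have prod: "word_prod n (g # ws) = mmat e n (p \<circ> swp r (Suc r)) (\<lambda>a. gy r i a + x (swp r (Suc r) a))"
    unfolding word_prod_Cons px(3) ri(2) using gen_mult[OF ri(1)] .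
  have neq: "p r \<noteq> p (Suc r)" using bij_neq[OF px(1), of r "Suc r"] ri(1) by simp
  note st = Fd_step[OF ri(1) gy_zero, of e p i x]
  have "Fd e n (p \<circ> swp r (Suc r)) (\<lambda>a. gy r i a + x (swp r (Suc r) a)) \<le> Fd e n p x + 1"
  proof -
    have "phi e (p (Suc r)) (p r) (gy r i (Suc r) + x r) \<le> phi e (p r) (p (Suc r)) (x (Suc r)) + 1"
      using neq by (auto simp: phi_def)
    then show ?thesis using st by linarith
  qed
  then have A: "Fd e n (p \<circ> swp r (Suc r)) (\<lambda>a. gy r i a + x (swp r (Suc r) a)) \<le> length (g # ws)"
    using px(4) by simp
  show ?case using prod gen_data_valid(1)[OF ri(1) px(1,2)] gen_data_valid(2)[OF ri(1) px(1,2), of i] A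
    by blast
qed


definition vd :: "nat \<Rightarrow> nat \<Rightarrow> (nat \<Rightarrow> nat) \<Rightarrow> (nat \<Rightarrow> int) \<Rightarrow> bool" where
  "vd e n p x \<longleftrightarrow> bij_betw p {..<n} {..<n} \<and> int e dvd (\<Sum>a<n. x a)"

lemma chain_incr: fixes p :: "nat \<Rightarrow> nat" and n :: nat assumes "\<forall>r. Suc r < n \<longrightarrow> p r < p (Suc r)"
  shows "a < b \<Longrightarrow> b < n \<Longrightarrow> p a < p b"
proof (induction b)
  case 0 then show ?case by simp
next
  case (Suc b)
  have "p b < p (Suc b)" using assms Suc.prems by simp
  then show ?case using Suc by (cases "a = b") auto
qed

lemma incr_id: fixes p :: "nat \<Rightarrow> nat" and n :: nat assumes "bij_betw p {..<n} {..<n}" "\<forall>a b. a < b \<longrightarrow> b < n \<longrightarrow> p a < p b"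
  shows "a < n \<Longrightarrow> p a = a"
proof -
  have ge: "a < n \<Longrightarrow> a \<le> p a" for a
  proof (induction a)
    case (Suc a) then show ?case using assms(2)[rule_format, of a "Suc a"] by simp
  qed simp
  have le: "d < n \<Longrightarrow> p (n - 1 - d) \<le> n - 1 - d" for d
  proof (induction d)
    case 0 then show ?case using bij_lt[OF assms(1), of "n - 1"] by simp
  next
    case (Suc d)
    have "p (n - 1 - Suc d) < p (n - 1 - d)" using assms(2)[rule_format, of "n - 1 - Suc d" "n - 1 - d"] Suc.prems by simp
    then show ?case using Suc by simp
  qed
  assume a: "a < n"
  have "p (n - 1 - (n - 1 - a)) \<le> n - 1 - (n - 1 - a)" using le[of "n - 1 - a"] a by simp
  then have "p a \<le> a" using a by (simp add: Suc_diff_le)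
  then show "p a = a" using ge[OF a] by simp
qed

lemma Fd_zero_one: assumes "e > 0" "vd e n p x" "Fd e n p x = 0"
  shows "mmat e n p x = 1\<^sub>m n"
proof -
  have bij: "bij_betw p {..<n} {..<n}" and s: "int e dvd (\<Sum>a<n. x a)" using assms(2) by (auto simp: vd_def)
  have z: "\<forall>q\<in>Pairs n. (\<lambda>(a,b). phi e (p a) (p b) (x b)) q = 0"
    using assms(3) unfolding Fd_def by (subst (asm) sum_eq_0_iff) auto
  have pt: "a < b \<Longrightarrow> b < n \<Longrightarrow> p a < p b \<and> int e dvd x b" for a b
  proof -
    assume ab: "a < b" "b < n"
    then have "(a,b) \<in> Pairs n" by (simp add: Pairs_def)
    then have "phi e (p a) (p b) (x b) = 0" using z by auto
    moreover have "p a \<noteq> p b" using bij_neq[OF bij, of a b] ab by simp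
    ultimately show ?thesis by (auto simp: phi_def split: if_splits)
  qed
  have pid: "\<And>a. a < n \<Longrightarrow> p a = a" using incr_id[OF bij] pt by blast
  have xd: "int e dvd x a" if "a < n" for a
  proof (cases "a = 0")
    case False then show ?thesis using pt[of 0 a] that by simp
  next
    case True
    have "(\<Sum>a<n. x a) = x 0 + (\<Sum>a\<in>{Suc 0..<n}. x a)" using sum_split0 that True by simp
    moreover have "int e dvd (\<Sum>a\<in>{Suc 0..<n}. x a)"
    proof (rule dvd_sum)
      fix a assume "a \<in> {Suc 0..<n}"
      then show "int e dvd x a" using pt[of 0 a] by auto
    qed
    ultimately show ?thesis using s True by (metis dvd_add_left_iff)
  qed
  have "mmat e n p x = mmat e n (\<lambda>a. a) (\<lambda>_. 0)"
    using assms(1) pid xd by (subst mmat_eq_iff) (auto simp: bij_lt[OF bij] dvd_eq_mod_eq_0)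
  then show ?thesis by (simp add: one_mmat[symmetric])
qed

lemma step_Fd_desc:
  assumes "Suc r < n" "phi e (p (Suc r)) (p r) (gy r i (Suc r) + x r) + 1 = phi e (p r) (p (Suc r)) (x (Suc r))"
  shows "Fd e n (p \<circ> swp r (Suc r)) (\<lambda>a. gy r i a + x (swp r (Suc r) a)) + 1 = Fd e n p x"
  using Fd_step[OF assms(1) gy_zero, of e p i x] assms(2) by linarith

lemma gy0: "r \<noteq> 0 \<Longrightarrow> gy r i a = 0"
  by (simp add: gy_def)

lemma gy_t: "gy 0 i (Suc 0) = i"
  by (simp add: gy_def tx_def)

lemma descent:
  assumes "e > 0" "2 \<le> n" "bij_betw p {..<n} {..<n}" "0 < Fd e n p x"
  shows "\<exists>r i. mmat e n (swp r (Suc r)) (gy r i) \<in> Xgen e n \<and> Suc r < n \<and>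
      Fd e n (p \<circ> swp r (Suc r)) (\<lambda>a. gy r i a + x (swp r (Suc r) a)) + 1 = Fd e n p x"
proof -
  have n1: "Suc 0 < n" using assms(2) by simp
  have t_in: "mmat e n (swp 0 (Suc 0)) (gy 0 (int m)) \<in> Xgen e n" if "m < e" for m
    using tgen_X[OF that, of n] tgen_mmat[OF assms(2), of e "int m"] by (simp add: gy_def)
  have s_in: "mmat e n (swp r (Suc r)) (gy r i) \<in> Xgen e n" if "r \<noteq> 0" "Suc r < n" for r i
  proof -
    have "sgen n (r+2) = mmat e n (swp r (Suc r)) (gy r i)" using sgen_mmat0[of n r e] that by (simp add: gy_def)
    moreover have "sgen n (r+2) \<in> Xgen e n" using sgen_X[of "r+2" n e] that by simp
    ultimately show ?thesis by simp
  qed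
  have neq: "a < n \<Longrightarrow> b < n \<Longrightarrow> a \<noteq> b \<Longrightarrow> p a \<noteq> p b" for a b using bij_neq[OF assms(3)] .
  show ?thesis
  proof (cases "p (Suc 0) < p 0")
    case True
    define m where "m = nat ((- x 0) mod int e)"
    have m: "m < e" "int m = (- x 0) mod int e" using assms(1) by (auto simp: m_def nat_less_iff)
    have "int m + x 0 = int e * (- ((- x 0) div int e))"
      using mult_div_mod_eq[of "int e" "- x 0"] m(2) by linarith
    then have dv: "int e dvd (gy 0 (int m) (Suc 0) + x 0)" by (simp add: gy_t)
    have "phi e (p (Suc 0)) (p 0) (gy 0 (int m) (Suc 0) + x 0) + 1 = phi e (p 0) (p (Suc 0)) (x (Suc 0))"
      using True dv by (simp add: phi_def)
    then show ?thesis using step_Fd_desc[OF n1] t_in[OF m(1)] n1 by blast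
  next
    case False
    then have lt01: "p 0 < p (Suc 0)" using neq[of 0 "Suc 0"] n1 by auto
    show ?thesis
    proof (cases "int e dvd x (Suc 0)")
      case False
      have "phi e (p (Suc 0)) (p 0) (gy 0 (int 0) (Suc 0) + x 0) + 1 = phi e (p 0) (p (Suc 0)) (x (Suc 0))"
        using lt01 False by (simp add: phi_def)
      then show ?thesis using step_Fd_desc[OF n1] t_in[of 0] assms(1) n1 by blast
    next
      case dv1: True
      show ?thesis
      proof (cases "\<exists>r. r \<noteq> 0 \<and> Suc r < n \<and> ((p (Suc r) < p r \<and> int e dvd x r) \<or> (p r < p (Suc r) \<and> \<not> int e dvd x (Suc r)))")
        case True
        then obtain r where r: "r \<noteq> 0" "Suc r < n"
          "(p (Suc r) < p r \<and> int e dvd x r) \<or> (p r < p (Suc r) \<and> \<not> int e dvd x (Suc r))" by blast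
        have "phi e (p (Suc r)) (p r) (gy r 0 (Suc r) + x r) + 1 = phi e (p r) (p (Suc r)) (x (Suc r))"
          using r by (auto simp: phi_def gy0)
        then show ?thesis using step_Fd_desc[OF r(2)] s_in[OF r(1,2)] r(2) by blast
      next
        case nodesc: False
        have ch: "Suc r < n \<longrightarrow> p r < p (Suc r) \<and> int e dvd x (Suc r)" for r
        proof (induction r)
          case 0 then show ?case using lt01 dv1 by simp
        next
          case (Suc r)
          show ?case
          proof
            assume h: "Suc (Suc r) < n"
            then have ih: "int e dvd x (Suc r)" using Suc.IH by simp
            have "p (Suc r) \<noteq> p (Suc (Suc r))" using neq[of "Suc r" "Suc (Suc r)"] h by simp
            then show "p (Suc r) < p (Suc (Suc r)) \<and> int e dvd x (Suc (Suc r))"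
              using nodesc h ih by (metis linorder_neqE_nat nat.distinct(1))
          qed
        qed
        have inc: "a < b \<Longrightarrow> b < n \<Longrightarrow> p a < p b" for a b
          using chain_incr[of n p] ch by blast
        have "Fd e n p x = 0"
          unfolding Fd_def
        proof (rule sum.neutral, clarify)
          fix a b assume "(a,b) \<in> Pairs n"
          then have ab: "a < b" "b < n" by (auto simp: Pairs_def)
          then obtain c where c: "b = Suc c" by (cases b) auto
          have "int e dvd x b" using ch[of c] c ab by simp
          then show "phi e (p a) (p b) (x b) = 0" using inc[OF ab] by (simp add: phi_def)
        qed
        then show ?thesis using assms(4) by simp
      qed
    qed
  qed
qed

lemma wlen_mmat: assumes "e > 0" "2 \<le> n" "vd e n p x"
  shows "wlen e n (mmat e n p x) = Fd e n p x"
proof -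
  have ex: "\<exists>ws. set ws \<subseteq> Xgen e n \<and> length ws = Fd e n p x \<and> word_prod n ws = mmat e n p x"
    if "vd e n p x" for p x
    using that
  proof (induction "Fd e n p x" arbitrary: p x rule: less_induct)
    case less
    show ?case
    proof (cases "Fd e n p x = 0")
      case True
      then have "mmat e n p x = 1\<^sub>m n" using Fd_zero_one[OF assms(1) less.prems] by simp
      then show ?thesis using True by (intro exI[of _ "[]"]) (simp add: word_prod_def)
    next
      case False
      have bij: "bij_betw p {..<n} {..<n}" using less.prems by (simp add: vd_def)
      obtain r i where ri: "mmat e n (swp r (Suc r)) (gy r i) \<in> Xgen e n" "Suc r < n"
        "Fd e n (p \<circ> swp r (Suc r)) (\<lambda>a. gy r i a + x (swp r (Suc r) a)) + 1 = Fd e n p x"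
        using descent[OF assms(1,2) bij, where x = x] False by blast
      let ?p = "p \<circ> swp r (Suc r)" and ?x = "\<lambda>a. gy r i a + x (swp r (Suc r) a)"
      have sx: "int e dvd (\<Sum>a<n. x a)" using less.prems by (simp add: vd_def)
      have v: "vd e n ?p ?x" using gen_data_valid(1)[OF ri(2) bij sx] gen_data_valid(2)[OF ri(2) bij sx, where i = i]
        by (simp add: vd_def)
      obtain ws where ws: "set ws \<subseteq> Xgen e n" "length ws = Fd e n ?p ?x" "word_prod n ws = mmat e n ?p ?x"
        using less.hyps[of ?p ?x] ri(3) v by auto
      let ?g = "mmat e n (swp r (Suc r)) (gy r i)"
      have gg: "?g * ?g = 1\<^sub>m n"
        using gen_mult[OF ri(2), of e "gy r i" "swp r (Suc r)" "gy r i"]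
        by (simp add: one_mmat[of n e] comp_def gy_inv)
      have "word_prod n (?g # ws) = ?g * (?g * mmat e n p x)"
        using ws(3) gen_mult[OF ri(2)] by (simp add: word_prod_Cons)
      also have "\<dots> = (?g * ?g) * mmat e n p x"
        by (rule assoc_mult_mat[symmetric, of _ n n _ n _ n]) auto
      also have "\<dots> = mmat e n p x" using gg by simp
      finally show ?thesis using ws ri by (intro exI[of _ "?g # ws"]) auto
    qed
  qed
  show ?thesis unfolding wlen_def
  proof (rule Least_equality)
    show "\<exists>ws. set ws \<subseteq> Xgen e n \<and> length ws = Fd e n p x \<and> word_prod n ws = mmat e n p x"
      using ex[OF assms(3)] .
  next
    fix m assume "\<exists>ws. set ws \<subseteq> Xgen e n \<and> length ws = m \<and> word_prod n ws = mmat e n p x"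
    then obtain ws where ws: "set ws \<subseteq> Xgen e n" "length ws = m" "word_prod n ws = mmat e n p x" by blast
    obtain q y where qy: "bij_betw q {..<n} {..<n}" "word_prod n ws = mmat e n q y" "Fd e n q y \<le> length ws"
      using word_mmat[OF assms(1,2) ws(1)] by blast
    have "mmat e n p x = mmat e n q y" using ws(3) qy(2) by simp
    then have "\<forall>a<n. p a = q a \<and> x a mod int e = y a mod int e"
      using assms(3) qy(1) by (subst (asm) mmat_eq_iff[OF assms(1)]) (auto simp: vd_def bij_lt)
    then have "Fd e n p x = Fd e n q y" by (rule Fd_cong)
    then show "Fd e n p x \<le> m" using qy(3) ws(2) by simp
  qed
qed


definition pinv :: "nat \<Rightarrow> (nat \<Rightarrow> nat) \<Rightarrow> nat \<Rightarrow> nat" where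
  "pinv n p = inv_into {..<n} p"

lemma pinv_bij: "bij_betw p {..<n} {..<n} \<Longrightarrow> bij_betw (pinv n p) {..<n} {..<n}"
  unfolding pinv_def by (rule bij_betw_inv_into)

lemma pinv_l: "bij_betw p {..<n} {..<n} \<Longrightarrow> a < n \<Longrightarrow> pinv n p (p a) = a"
  unfolding pinv_def bij_betw_def by (simp add: inv_into_f_f)

lemma pinv_r: "bij_betw p {..<n} {..<n} \<Longrightarrow> c < n \<Longrightarrow> p (pinv n p c) = c"
  unfolding pinv_def bij_betw_def by (simp add: f_inv_into_f)

lemma vd_mult: assumes "vd e n p x" "vd e n q y"
  shows "vd e n (q \<circ> p) (\<lambda>a. x a + y (p a))"
proof -
  have bp: "bij_betw p {..<n} {..<n}" and bq: "bij_betw q {..<n} {..<n}"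
    using assms by (auto simp: vd_def)
  have "(\<Sum>a<n. y (p a)) = (\<Sum>a<n. y a)" using sum.reindex_bij_betw[OF bp, of y] by simp
  then have "(\<Sum>a<n. x a + y (p a)) = (\<Sum>a<n. x a) + (\<Sum>a<n. y a)" by (simp add: sum.distrib)
  then show ?thesis using assms bij_betw_trans[OF bp bq] by (simp add: vd_def)
qed

lemma vd_inv: assumes "vd e n p x" shows "vd e n (pinv n p) (\<lambda>c. - x (pinv n p c))"
proof -
  have bp: "bij_betw p {..<n} {..<n}" using assms by (simp add: vd_def)
  have "(\<Sum>c<n. x (pinv n p c)) = (\<Sum>a<n. x a)" using sum.reindex_bij_betw[OF pinv_bij[OF bp], of x] by simp
  then have "(\<Sum>c<n. - x (pinv n p c)) = - (\<Sum>a<n. x a)" by (simp add: sum_negf)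
  then show ?thesis using assms pinv_bij[OF bp] by (simp add: vd_def)
qed

lemma vd_Geen: "e > 0 \<Longrightarrow> vd e n p x \<Longrightarrow> mmat e n p x \<in> Geen e n"
  using mmat_Geen by (simp add: vd_def)

lemma Geen_vd: "e > 0 \<Longrightarrow> A \<in> Geen e n \<Longrightarrow> \<exists>p x. vd e n p x \<and> A = mmat e n p x"
  using Geen_mmat by (simp add: vd_def)

lemma vd_lt: "vd e n p x \<Longrightarrow> \<forall>a<n. p a < n"
  by (auto simp: vd_def bij_lt)

lemma mmat_mult_vd: "vd e n p x \<Longrightarrow> mmat e n p x * mmat e n q y = mmat e n (q \<circ> p) (\<lambda>a. x a + y (p a))"
  by (rule mmat_mult) (rule vd_lt)

lemma inv_r: assumes "e > 0" "vd e n p x"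
  shows "mmat e n p x * mmat e n (pinv n p) (\<lambda>c. - x (pinv n p c)) = 1\<^sub>m n"
proof -
  have bp: "bij_betw p {..<n} {..<n}" using assms by (simp add: vd_def)
  have "mmat e n p x * mmat e n (pinv n p) (\<lambda>c. - x (pinv n p c)) =
      mmat e n (pinv n p \<circ> p) (\<lambda>a. x a + - x (pinv n p (p a)))"
    using mmat_mult_vd[OF assms(2)] .
  also have "\<dots> = mmat e n (\<lambda>a. a) (\<lambda>_. 0)"
    using assms(1) pinv_l[OF bp] bij_lt[OF pinv_bij[OF bp]] bij_lt[OF bp]
    by (subst mmat_eq_iff) auto
  finally show ?thesis by (simp add: one_mmat[symmetric])
qed

lemma inv_l: assumes "e > 0" "vd e n p x"
  shows "mmat e n (pinv n p) (\<lambda>c. - x (pinv n p c)) * mmat e n p x = 1\<^sub>m n"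
proof -
  have bp: "bij_betw p {..<n} {..<n}" using assms by (simp add: vd_def)
  have "mmat e n (pinv n p) (\<lambda>c. - x (pinv n p c)) * mmat e n p x =
      mmat e n (p \<circ> pinv n p) (\<lambda>c. - x (pinv n p c) + x (pinv n p c))"
    using mmat_mult_vd[OF vd_inv[OF assms(2)]] .
  also have "\<dots> = mmat e n (\<lambda>a. a) (\<lambda>_. 0)"
    using assms(1) pinv_r[OF bp] bij_lt[OF pinv_bij[OF bp]] bij_lt[OF bp]
    by (subst mmat_eq_iff) auto
  finally show ?thesis by (simp add: one_mmat[symmetric])
qed

lemma Geen_carrier: "A \<in> Geen e n \<Longrightarrow> A \<in> carrier_mat n n"
  by (simp add: Geen_def)

lemma ginv_unique: assumes "u \<in> Geen e n" "v \<in> Geen e n" "u * v = 1\<^sub>m n" "w \<in> Geen e n" "w * u = 1\<^sub>m n"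
  shows "ginv e n u = v"
  unfolding ginv_def
proof (rule the_equality)
  show "v \<in> Geen e n \<and> u * v = 1\<^sub>m n" using assms by simp
  have eqw: "v' = w" if "v' \<in> Geen e n" "u * v' = 1\<^sub>m n" for v'
  proof -
    have c: "u \<in> carrier_mat n n" "v' \<in> carrier_mat n n" "w \<in> carrier_mat n n"
      using assms that Geen_carrier by auto
    have "v' = (w * u) * v'" using assms(5) c by simp
    also have "\<dots> = w * (u * v')" using c by (simp add: assoc_mult_mat[of _ n n _ n _ n])
    also have "\<dots> = w" using that c by simp
    finally show ?thesis .
  qed
  fix v' assume "v' \<in> Geen e n \<and> u * v' = 1\<^sub>m n"
  then show "v' = v" using eqw[of v'] eqw[of v] assms by auto
qed

lemma ginv_mmat: assumes "e > 0" "vd e n p x"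
  shows "ginv e n (mmat e n p x) = mmat e n (pinv n p) (\<lambda>c. - x (pinv n p c))"
  by (rule ginv_unique[where w = "mmat e n (pinv n p) (\<lambda>c. - x (pinv n p c))"])
    (use assms vd_Geen vd_inv inv_r inv_l in auto)

lemma Fd_neg: "Fd e n p (\<lambda>a. - x a) = Fd e n p x"
  unfolding Fd_def by (rule sum.cong) (auto simp: phi_def)

lemma Fd_inv: assumes bp: "bij_betw p {..<n} {..<n}"
  shows "Fd e n (pinv n p) (\<lambda>c. z (pinv n p c)) = Fd e n p z"
  unfolding Fd_def
proof (rule sum.reindex_bij_witness[where j = "\<lambda>(c,d). (min (pinv n p c) (pinv n p d), max (pinv n p c) (pinv n p d))"
      and i = "\<lambda>(a,b). (min (p a) (p b), max (p a) (p b))"])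
  let ?q = "pinv n p"
  have qb: "bij_betw ?q {..<n} {..<n}" using pinv_bij[OF bp] .
  fix cd assume h: "cd \<in> Pairs n"
  obtain c d where cd: "cd = (c,d)" "c < d" "d < n" using h by (auto simp: Pairs_def)
  have qn: "?q c \<noteq> ?q d" using bij_neq[OF qb, of c d] cd by simp
  have lt: "?q c < n" "?q d < n" using bij_lt[OF qb] cd by auto
  have pq: "p (?q c) = c" "p (?q d) = d" using pinv_r[OF bp] cd by auto
  show "(\<lambda>(a,b). (min (p a) (p b), max (p a) (p b))) ((\<lambda>(c,d). (min (?q c) (?q d), max (?q c) (?q d))) cd) = cd"
    using cd pq by (cases "?q c < ?q d") (auto simp: min_def max_def)
  show "(\<lambda>(c,d). (min (?q c) (?q d), max (?q c) (?q d))) cd \<in> Pairs n"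
    using cd qn lt by (auto simp: Pairs_def min_def max_def)
  show "(\<lambda>(a,b). phi e (p a) (p b) (z b)) ((\<lambda>(c,d). (min (?q c) (?q d), max (?q c) (?q d))) cd) =
        (\<lambda>(c,d). phi e (?q c) (?q d) (z (?q d))) cd"
    using cd pq qn by (cases "?q c < ?q d") (auto simp: min_def max_def phi_def)
next
  let ?q = "pinv n p"
  fix ab assume h: "ab \<in> Pairs n"
  obtain a b where ab: "ab = (a,b)" "a < b" "b < n" using h by (auto simp: Pairs_def)
  have pn: "p a \<noteq> p b" using bij_neq[OF bp, of a b] ab by simp
  have lt: "p a < n" "p b < n" using bij_lt[OF bp] ab by auto
  have qp: "?q (p a) = a" "?q (p b) = b" using pinv_l[OF bp] ab by auto
  show "(\<lambda>(c,d). (min (?q c) (?q d), max (?q c) (?q d))) ((\<lambda>(a,b). (min (p a) (p b), max (p a) (p b))) ab) = ab"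
    using ab qp by (cases "p a < p b") (auto simp: min_def max_def)
  show "(\<lambda>(a,b). (min (p a) (p b), max (p a) (p b))) ab \<in> Pairs n"
    using ab pn lt by (auto simp: Pairs_def min_def max_def)
qed


definition actp :: "nat \<Rightarrow> (nat \<Rightarrow> nat) \<Rightarrow> nat \<Rightarrow> nat" where
  "actp r p = p \<circ> swp r (Suc r)"

definition actx :: "nat \<Rightarrow> int \<Rightarrow> (nat \<Rightarrow> int) \<Rightarrow> nat \<Rightarrow> int" where
  "actx r i x = (\<lambda>a. gy r i a + x (swp r (Suc r) a))"

lemma gy_r: "gy r i r = - gy r i (Suc r)"
  by (simp add: gy_def tx_def)

lemma gy_big: "Suc r < b \<Longrightarrow> gy r i b = 0"
  by (simp add: gy_def tx_def)

lemma gy_small: "b < r \<Longrightarrow> gy r i b = 0"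
  by (simp add: gy_def tx_def)

context
  fixes e n :: nat
  assumes epos: "0 < e" and n2: "2 \<le> n"
begin

abbreviation Gm :: "nat \<Rightarrow> int \<Rightarrow> complex mat" where
  "Gm r i \<equiv> mmat e n (swp r (Suc r)) (gy r i)"

lemma vd_gen: "Suc r < n \<Longrightarrow> vd e n (swp r (Suc r)) (gy r i)"
  using swp_bij gy_sum by (simp add: vd_def)

lemma vd_one: "vd e n (\<lambda>a. a) (\<lambda>_. 0)"
  by (simp add: vd_def bij_betw_def)

lemma gen_Geen: "Suc r < n \<Longrightarrow> Gm r i \<in> Geen e n"
  using vd_Geen[OF epos vd_gen] .

lemma X_Geen: "g \<in> Xgen e n \<Longrightarrow> g \<in> Geen e n"
  using Xgen_cases[OF _ n2] gen_Geen by blast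

lemma step:
  assumes "Suc r < n" "vd e n p x"
  shows "Gm r i * mmat e n p x = mmat e n (actp r p) (actx r i x)"
    "vd e n (actp r p) (actx r i x)"
    "Fd e n (actp r p) (actx r i x) + phi e (p r) (p (Suc r)) (x (Suc r))
       = Fd e n p x + phi e (p (Suc r)) (p r) (gy r i (Suc r) + x r)"
proof -
  show "Gm r i * mmat e n p x = mmat e n (actp r p) (actx r i x)"
    using gen_mult[OF assms(1)] by (simp add: actp_def actx_def)
  show "vd e n (actp r p) (actx r i x)"
  proof -
    have b: "bij_betw p {..<n} {..<n}" and s: "int e dvd (\<Sum>a<n. x a)" using assms(2) by (auto simp: vd_def)
    show ?thesis using gen_data_valid(1)[OF assms(1) b s] gen_data_valid(2)[OF assms(1) b s, where i = i]
      by (simp add: vd_def actp_def actx_def)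
  qed
  show "Fd e n (actp r p) (actx r i x) + phi e (p r) (p (Suc r)) (x (Suc r))
       = Fd e n p x + phi e (p (Suc r)) (p r) (gy r i (Suc r) + x r)"
    using Fd_step[OF assms(1) gy_zero] by (simp add: actp_def actx_def)
qed

lemma Gm_sq: "Suc r < n \<Longrightarrow> Gm r i * Gm r i = 1\<^sub>m n"
  using gen_mult[of r n e "gy r i" "swp r (Suc r)" "gy r i"]
  by (simp add: one_mmat[of n e] comp_def gy_inv)

lemma ginv_gen: "Suc r < n \<Longrightarrow> ginv e n (Gm r i) = Gm r i"
  using ginv_unique[OF gen_Geen gen_Geen Gm_sq gen_Geen Gm_sq] by blast

lemma Fd_gen: "Suc r < n \<Longrightarrow> Fd e n (swp r (Suc r)) (gy r i) = 1"
proof -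
  assume r: "Suc r < n"
  have "Fd e n (actp r (\<lambda>a. a)) (actx r i (\<lambda>_. 0)) + phi e r (Suc r) 0 = Fd e n (\<lambda>a. a) (\<lambda>_. 0) + phi e (Suc r) r (gy r i (Suc r) + 0)"
    using step(3)[OF r vd_one] by simp
  moreover have "actp r (\<lambda>a. a) = swp r (Suc r)" "actx r i (\<lambda>_. 0) = gy r i"
    by (auto simp: actp_def actx_def)
  ultimately show ?thesis by (simp add: Fd_one phi_def)
qed

lemma wlen_gen: "Suc r < n \<Longrightarrow> wlen e n (Gm r i) = 1"
  using wlen_mmat[OF epos n2 vd_gen] Fd_gen by simp

lemma Geen_mult: "A \<in> Geen e n \<Longrightarrow> B \<in> Geen e n \<Longrightarrow> A * B \<in> Geen e n"
proof -
  assume "A \<in> Geen e n" "B \<in> Geen e n"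
  then obtain p x q y where "vd e n p x" "A = mmat e n p x" "vd e n q y" "B = mmat e n q y"
    using Geen_vd[OF epos] by metis
  then show ?thesis using mmat_mult_vd vd_mult vd_Geen[OF epos] by simp
qed

lemma ginv_props: assumes "A \<in> Geen e n"
  shows "ginv e n A \<in> Geen e n" "A * ginv e n A = 1\<^sub>m n" "ginv e n A * A = 1\<^sub>m n"
    "wlen e n (ginv e n A) = wlen e n A"
proof -
  obtain p x where px: "vd e n p x" "A = mmat e n p x" using Geen_vd[OF epos assms] by blast
  have g: "ginv e n A = mmat e n (pinv n p) (\<lambda>c. - x (pinv n p c))" using ginv_mmat[OF epos px(1)] px(2) by simp
  show "ginv e n A \<in> Geen e n" using g vd_Geen[OF epos vd_inv[OF px(1)]] by simp
  show "A * ginv e n A = 1\<^sub>m n" using g px inv_r[OF epos] by simp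
  show "ginv e n A * A = 1\<^sub>m n" using g px inv_l[OF epos] by simp
  have bp: "bij_betw p {..<n} {..<n}" using px(1) by (simp add: vd_def)
  have "wlen e n (ginv e n A) = Fd e n (pinv n p) (\<lambda>c. - x (pinv n p c))"
    using g wlen_mmat[OF epos n2 vd_inv[OF px(1)]] by simp
  also have "\<dots> = Fd e n p (\<lambda>a. - x a)" using Fd_inv[OF bp, of e "\<lambda>a. - x a"] by simp
  also have "\<dots> = wlen e n A" using Fd_neg wlen_mmat[OF epos n2 px(1)] px(2) by simp
  finally show "wlen e n (ginv e n A) = wlen e n A" .
qed

lemma ginv_ginv: assumes "A \<in> Geen e n" shows "ginv e n (ginv e n A) = A"
proof -
  note h = ginv_props[OF assms]
  show ?thesis by (rule ginv_unique[OF h(1) assms h(3) assms h(2)])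
qed

lemma ginv_mult: assumes "A \<in> Geen e n" "B \<in> Geen e n"
  shows "ginv e n (A * B) = ginv e n B * ginv e n A"
proof (rule ginv_unique[where w = "ginv e n B * ginv e n A"])
  have c: "A \<in> carrier_mat n n" "B \<in> carrier_mat n n" "ginv e n A \<in> carrier_mat n n" "ginv e n B \<in> carrier_mat n n"
    using assms ginv_props Geen_carrier by blast+
  show "A * B \<in> Geen e n" using Geen_mult assms by blast
  show "ginv e n B * ginv e n A \<in> Geen e n" using Geen_mult assms ginv_props by blast
  show "ginv e n B * ginv e n A \<in> Geen e n" using Geen_mult assms ginv_props by blast
  have "A * B * (ginv e n B * ginv e n A) = A * (B * ginv e n B) * ginv e n A"
    using c by (simp add: assoc_mult_mat[of _ n n _ n _ n])
  then show "A * B * (ginv e n B * ginv e n A) = 1\<^sub>m n" using ginv_props assms c by simp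
  have "ginv e n B * ginv e n A * (A * B) = ginv e n B * (ginv e n A * A) * B"
    using c by (simp add: assoc_mult_mat[of _ n n _ n _ n])
  then show "ginv e n B * ginv e n A * (A * B) = 1\<^sub>m n" using ginv_props assms c by simp
qed

lemma suffix_iff: assumes "u \<in> Geen e n" "w \<in> Geen e n"
  shows "suffix_le e n u w \<longleftrightarrow> prefix_le e n (ginv e n u) (ginv e n w)"
proof -
  have giu: "ginv e n u \<in> Geen e n" using ginv_props(1)[OF assms(1)] .
  have m: "w * ginv e n u \<in> Geen e n" using Geen_mult[OF assms(2) giu] .
  have "ginv e n (w * ginv e n u) = ginv e n (ginv e n u) * ginv e n w"
    using ginv_mult[OF assms(2) giu] .
  then have "ginv e n (w * ginv e n u) = u * ginv e n w" using ginv_ginv[OF assms(1)] by simp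
  moreover have "wlen e n (ginv e n (w * ginv e n u)) = wlen e n (w * ginv e n u)"
    using ginv_props(4)[OF m] .
  ultimately have "wlen e n (w * ginv e n u) = wlen e n (u * ginv e n w)" by simp
  then show ?thesis unfolding suffix_le_def prefix_le_def
    using assms giu ginv_props(1)[OF assms(2)] ginv_props(4)[OF assms(1)] ginv_props(4)[OF assms(2)] ginv_ginv[OF assms(1)] by auto
qed

lemma prefix_gen: assumes "Suc r < n" "h \<in> Geen e n" "wlen e n (Gm r i * h) = wlen e n h + 1"
  shows "prefix_le e n (Gm r i) (Gm r i * h)"
proof -
  have c: "Gm r i \<in> carrier_mat n n" "h \<in> carrier_mat n n" using assms Geen_carrier by auto
  have "ginv e n (Gm r i) * (Gm r i * h) = h"
    using ginv_gen[OF assms(1)] Gm_sq[OF assms(1)] c by (simp add: assoc_mult_mat[symmetric, of _ n n _ n _ n])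
  then show ?thesis unfolding prefix_le_def
    using gen_Geen[OF assms(1)] Geen_mult[OF gen_Geen[OF assms(1)] assms(2)] wlen_gen[OF assms(1)] assms(3) by simp
qed

lemma suffix_gen: assumes "Suc r < n" "h \<in> Geen e n" "wlen e n (h * Gm r i) = wlen e n h + 1"
  shows "suffix_le e n (Gm r i) (h * Gm r i)"
proof -
  have c: "Gm r i \<in> carrier_mat n n" "h \<in> carrier_mat n n" using assms Geen_carrier by auto
  have "(h * Gm r i) * ginv e n (Gm r i) = h"
    using ginv_gen[OF assms(1)] Gm_sq[OF assms(1)] c by (simp add: assoc_mult_mat[of _ n n _ n _ n])
  then show ?thesis unfolding suffix_le_def
    using gen_Geen[OF assms(1)] Geen_mult[OF assms(2) gen_Geen[OF assms(1)]] wlen_gen[OF assms(1)] assms(3) by simp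
qed

lemma prefix_gen_iff: assumes "Suc r < n" "vd e n p x"
  shows "prefix_le e n (Gm r i) (mmat e n p x) \<longleftrightarrow>
    phi e (p (Suc r)) (p r) (gy r i (Suc r) + x r) + 1 = phi e (p r) (p (Suc r)) (x (Suc r))"
proof -
  have "prefix_le e n (Gm r i) (mmat e n p x) \<longleftrightarrow> 1 + Fd e n (actp r p) (actx r i x) = Fd e n p x"
    unfolding prefix_le_def using gen_Geen[OF assms(1)] vd_Geen[OF epos assms(2)] wlen_gen[OF assms(1)]
      ginv_gen[OF assms(1)] step[OF assms] wlen_mmat[OF epos n2 assms(2)]
      wlen_mmat[OF epos n2 step(2)[OF assms]] by simp
  then show ?thesis using step(3)[OF assms, of i] by linarith
qed

end


definition Icond :: "nat \<Rightarrow> nat \<Rightarrow> int \<Rightarrow> (nat \<Rightarrow> nat) \<Rightarrow> (nat \<Rightarrow> int) \<Rightarrow> bool" where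
  "Icond e n kap p x \<longleftrightarrow> (\<forall>a b. a < b \<longrightarrow> b < n \<longrightarrow> p a < p b \<longrightarrow> int e dvd x b \<or> int e dvd (kap - x b))"

lemma Icond_inv: assumes "bij_betw p {..<n} {..<n}" "Icond e n kap p x"
  shows "Icond e n (- kap) (pinv n p) (\<lambda>c. - x (pinv n p c))"
  unfolding Icond_def
proof (intro allI impI)
  fix c d assume cd: "c < d" "d < n" "pinv n p c < pinv n p d"
  let ?a = "pinv n p c" and ?b = "pinv n p d"
  have lt: "?b < n" using bij_lt[OF pinv_bij[OF assms(1)]] cd by simp
  have "p ?a = c" "p ?b = d" using pinv_r[OF assms(1)] cd by auto
  then have "int e dvd x ?b \<or> int e dvd (kap - x ?b)"
    using assms(2) cd lt unfolding Icond_def by metis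
  moreover have "- kap - - x ?b = - (kap - x ?b)" by simp
  ultimately show "int e dvd - x ?b \<or> int e dvd (- kap - - x ?b)"
    by (metis dvd_minus_iff)
qed

lemma sum_ge_eq: fixes f g :: "'a \<Rightarrow> nat"
  assumes "finite S" "\<forall>s\<in>S. g s \<le> f s"
  shows "sum f S = sum g S \<longleftrightarrow> (\<forall>s\<in>S. f s = g s)"
proof
  assume h: "sum f S = sum g S"
  show "\<forall>s\<in>S. f s = g s"
  proof (rule ccontr)
    assume "\<not> (\<forall>s\<in>S. f s = g s)"
    then obtain s where "s \<in> S" "g s < f s" using assms(2) by force
    then have "sum g S < sum f S" using sum_strict_mono_ex1[OF assms(1) assms(2)] by blast
    then show False using h by simp
  qed
qed (rule sum.cong, auto)

lemma not_dvd_k: "1 \<le> k \<Longrightarrow> k < e \<Longrightarrow> \<not> int e dvd int k"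
  by (simp add: nat_dvd_not_less)

context
  fixes e n :: nat
  assumes epos: "0 < e" and n2: "2 \<le> n"
begin

lemma interval_char:
  assumes k: "1 \<le> k" "k < e" and v: "vd e n p x"
  shows "mmat e n p x \<in> interval e n (lam e n ^\<^sub>m k) \<longleftrightarrow> Icond e n (int k) p x"
proof -
  define L :: "nat \<Rightarrow> int" where "L a = int k * (if a = 0 then - (int n - 1) else 1)" for a
  have lk: "lam e n ^\<^sub>m k = mmat e n (\<lambda>a. a) L" unfolding L_def by (rule lam_pow)
  have sL: "(\<Sum>a<n. L a) = 0"
  proof -
    have "(\<Sum>a<n. L a) = L 0 + (\<Sum>a\<in>{Suc 0..<n}. L a)" using sum_split0[of n L] n2 by simp
    also have "(\<Sum>a\<in>{Suc 0..<n}. L a) = (\<Sum>a\<in>{Suc 0..<n}. int k)" by (rule sum.cong) (auto simp: L_def)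
    finally show ?thesis using n2 by (simp add: L_def algebra_simps of_nat_diff)
  qed
  have vL: "vd e n (\<lambda>a. a) L" using sL by (simp add: vd_def bij_betw_def)
  have bp: "bij_betw p {..<n} {..<n}" using v by (simp add: vd_def)
  have gw: "ginv e n (mmat e n p x) * lam e n ^\<^sub>m k = mmat e n (pinv n p) (\<lambda>c. (\<lambda>a. L a - x a) (pinv n p c))"
    unfolding ginv_mmat[OF epos v] lk
    by (subst mmat_mult_vd[OF vd_inv[OF v]]) (simp add: comp_def)
  have vgw: "vd e n (pinv n p) (\<lambda>c. (\<lambda>a. L a - x a) (pinv n p c))"
    using vd_mult[OF vd_inv[OF v] vL] by (simp add: comp_def)
  have w1: "wlen e n (ginv e n (mmat e n p x) * lam e n ^\<^sub>m k) = Fd e n p (\<lambda>a. L a - x a)"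
    unfolding gw wlen_mmat[OF epos n2 vgw] using Fd_inv[OF bp, of e "\<lambda>a. L a - x a"] by simp
  have ndk: "\<not> int e dvd int k" using not_dvd_k k by simp
  have w2: "wlen e n (lam e n ^\<^sub>m k) = (\<Sum>q\<in>Pairs n. 2)"
    unfolding lk wlen_mmat[OF epos n2 vL] Fd_def
    by (rule sum.cong) (use ndk in \<open>auto simp: Pairs_def phi_def L_def\<close>)
  have w3: "wlen e n (mmat e n p x) = Fd e n p x" using wlen_mmat[OF epos n2 v] .
  have sumeq: "Fd e n p x + Fd e n p (\<lambda>a. L a - x a) =
      (\<Sum>(a,b)\<in>Pairs n. phi e (p a) (p b) (x b) + phi e (p a) (p b) (L b - x b))"
    unfolding Fd_def by (simp add: sum.distrib[symmetric] split_def)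
  have ge: "\<forall>q\<in>Pairs n. 2 \<le> (\<lambda>(a,b). phi e (p a) (p b) (x b) + phi e (p a) (p b) (L b - x b)) q"
  proof
    fix q assume "q \<in> Pairs n"
    then obtain a b where q: "q = (a,b)" "a < b" "b < n" by (auto simp: Pairs_def)
    have Lb: "L b = int k" using q by (simp add: L_def)
    have "\<not> (int e dvd x b \<and> int e dvd (int k - x b))"
      using ndk by (metis diff_add_cancel dvd_add)
    then show "2 \<le> (\<lambda>(a,b). phi e (p a) (p b) (x b) + phi e (p a) (p b) (L b - x b)) q"
      using q Lb by (auto simp: phi_def)
  qed
  have trm: "(\<lambda>(a,b). phi e (p a) (p b) (x b) + phi e (p a) (p b) (L b - x b)) (a,b) = 2 \<longleftrightarrow>
      (p a < p b \<longrightarrow> int e dvd x b \<or> int e dvd (int k - x b))" if "(a,b) \<in> Pairs n" for a b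
  proof -
    have q: "a < b" "b < n" using that by (auto simp: Pairs_def)
    have Lb: "L b = int k" using q by (simp add: L_def)
    have ne: "p a \<noteq> p b" using bij_neq[OF bp, of a b] q by simp
    have "\<not> (int e dvd x b \<and> int e dvd (int k - x b))"
      using ndk by (metis diff_add_cancel dvd_add)
    then show ?thesis using Lb ne by (auto simp: phi_def)
  qed
  have "mmat e n p x \<in> interval e n (lam e n ^\<^sub>m k) \<longleftrightarrow>
      Fd e n p x + Fd e n p (\<lambda>a. L a - x a) = (\<Sum>q\<in>Pairs n. 2)"
    unfolding interval_def prefix_le_def using vd_Geen[OF epos v] vd_Geen[OF epos vL] lk w1 w2 w3 by simp
  also have "\<dots> \<longleftrightarrow> (\<forall>q\<in>Pairs n. (\<lambda>(a,b). phi e (p a) (p b) (x b) + phi e (p a) (p b) (L b - x b)) q = 2)"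
    unfolding sumeq by (rule sum_ge_eq[OF finite_Pairs ge])
  also have "\<dots> \<longleftrightarrow> Icond e n (int k) p x"
    unfolding Icond_def using trm by (auto simp: Pairs_def)
  finally show ?thesis .
qed

end


lemma lub_both_intro:
  assumes "z \<in> interval e n (lam e n ^\<^sub>m k)"
    "prefix_le e n x z" "prefix_le e n y z"
    "\<And>w. w \<in> interval e n (lam e n ^\<^sub>m k) \<Longrightarrow> prefix_le e n x w \<Longrightarrow> prefix_le e n y w \<Longrightarrow> prefix_le e n z w"
    "suffix_le e n x z" "suffix_le e n y z"
    "\<And>w. w \<in> interval e n (lam e n ^\<^sub>m k) \<Longrightarrow> suffix_le e n x w \<Longrightarrow> suffix_le e n y w \<Longrightarrow> suffix_le e n z w"
  shows "lub_both e n k x y z"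
  using assms unfolding lub_both_def is_lub_def by blast

lemma lub_both_sym: "lub_both e n k x y z \<Longrightarrow> lub_both e n k y x z"
  unfolding lub_both_def is_lub_def by blast

context
  fixes e n :: nat
  assumes epos: "0 < e" and n2: "2 \<le> n"
begin

lemma prefix_by_data:
  assumes "vd e n p x" "z \<in> Geen e n" "wlen e n z = m"
    "ginv e n z * mmat e n p x = mmat e n p' x'" "vd e n p' x'" "Fd e n p' x' + m = Fd e n p x"
  shows "prefix_le e n z (mmat e n p x)"
  unfolding prefix_le_def using assms vd_Geen[OF epos] wlen_mmat[OF epos n2] by simp

lemma desc_of_prefix:
  assumes "Suc r < n" "vd e n p x" "prefix_le e n (Gm e n r i) (mmat e n p x)"
  shows "phi e (p (Suc r)) (p r) (gy r i (Suc r) + x r) + 1 = phi e (p r) (p (Suc r)) (x (Suc r))"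
  using prefix_gen_iff[OF epos n2 assms(1,2)] assms(3) by simp

lemma one_mm: "1\<^sub>m n = mmat e n (\<lambda>a. a) (\<lambda>_. 0)"
  by (rule one_mmat)

lemma Gm_one: "Gm e n r i = Gm e n r i * mmat e n (\<lambda>a. a) (\<lambda>_. 0)"
  by (simp add: one_mm[symmetric])

lemma mc: "mmat e n p x \<in> carrier_mat n n" by simp

end


lemma actp_ev[simp]: "actp r p r = p (Suc r)" "actp r p (Suc r) = p r"
  "a \<noteq> r \<Longrightarrow> a \<noteq> Suc r \<Longrightarrow> actp r p a = p a"
  by (auto simp: actp_def swp_def)

lemma actx_ev[simp]: "actx r i x r = gy r i r + x (Suc r)" "actx r i x (Suc r) = gy r i (Suc r) + x r"
  "a \<noteq> r \<Longrightarrow> a \<noteq> Suc r \<Longrightarrow> actx r i x a = gy r i a + x a"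
  by (auto simp: actx_def swp_def)

lemma gy_S0[simp]: "gy (Suc r) i a = 0"
  by (simp add: gy_def)

lemma braid_phi:
  assumes "u \<noteq> v" "v \<noteq> w" "u \<noteq> w"
    "phi e v u za + 1 = phi e u v z1" "phi e w v z1 + 1 = phi e v w z2"
  shows "phi e u w z2 = phi e w u za + 1"
  using assms by (auto simp: phi_def split: if_splits)

context
  fixes e n :: nat
  assumes epos: "0 < e" and n2: "2 \<le> n"
begin

lemma assoc3: "A \<in> carrier_mat n n \<Longrightarrow> B \<in> carrier_mat n n \<Longrightarrow> C \<in> carrier_mat n n \<Longrightarrow> A * B * C = A * (B * C)"
  by (rule assoc_mult_mat[of _ n n _ n _ n])

lemma braid_case:
  assumes r: "Suc (Suc r) < n"
  shows "Gm e n r i * Gm e n (Suc r) 0 * Gm e n r i = Gm e n (Suc r) 0 * Gm e n r i * Gm e n (Suc r) 0"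
    and "Gm e n r i * Gm e n (Suc r) 0 * Gm e n r i \<in> Geen e n"
    and "wlen e n (Gm e n r i * Gm e n (Suc r) 0 * Gm e n r i) = 3"
    and "wlen e n (Gm e n r i * Gm e n (Suc r) 0) = 2"
    and "wlen e n (Gm e n (Suc r) 0 * Gm e n r i) = 2"
    and "ginv e n (Gm e n r i * Gm e n (Suc r) 0 * Gm e n r i) = Gm e n r i * Gm e n (Suc r) 0 * Gm e n r i"
    and "\<And>w. w \<in> Geen e n \<Longrightarrow> prefix_le e n (Gm e n r i) w \<Longrightarrow> prefix_le e n (Gm e n (Suc r) 0) w \<Longrightarrow>
          prefix_le e n (Gm e n r i * Gm e n (Suc r) 0 * Gm e n r i) w"
    and "\<exists>p x. vd e n p x \<and> Gm e n r i * Gm e n (Suc r) 0 * Gm e n r i = mmat e n p x \<and> (\<forall>kap. Icond e n kap p x)"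
proof -
  let ?A = "Gm e n r i" and ?B = "Gm e n (Suc r) 0" and ?I = "mmat e n (\<lambda>a. a) (\<lambda>_. 0)"
  have r1: "Suc r < n" using r by simp
  have cA: "?A \<in> carrier_mat n n" and cB: "?B \<in> carrier_mat n n" by simp_all
  have AI: "?A = ?A * ?I" and BI: "?B = ?B * ?I" using Gm_one[OF epos n2] by blast+
  note s1 = step[OF epos n2 r1 vd_one[OF epos n2], of i]
  note s2 = step[OF epos n2 r s1(2), of 0]
  note s3 = step[OF epos n2 r1 s2(2), of i]
  note t1 = step[OF epos n2 r vd_one[OF epos n2], of 0]
  note t2 = step[OF epos n2 r1 t1(2), of i]
  note t3 = step[OF epos n2 r t2(2), of 0]
  let ?p3 = "actp r (actp (Suc r) (actp r (\<lambda>a. a)))" and ?x3 = "actx r i (actx (Suc r) 0 (actx r i (\<lambda>_. 0)))"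
  have Z: "?A * ?B * ?A = mmat e n ?p3 ?x3"
  proof -
    have "?A * ?B * ?A = ?A * (?B * (?A * ?I))" using assoc3[OF cA cB cA] AI by simp
    then show ?thesis using s1(1) s2(1) s3(1) by simp
  qed
  have Z': "?B * ?A * ?B = mmat e n (actp (Suc r) (actp r (actp (Suc r) (\<lambda>a. a)))) (actx (Suc r) 0 (actx r i (actx (Suc r) 0 (\<lambda>_. 0))))"
  proof -
    have "?B * ?A * ?B = ?B * (?A * (?B * ?I))" using assoc3[OF cB cA cB] BI by simp
    then show ?thesis using t1(1) t2(1) t3(1) by simp
  qed
  show "?A * ?B * ?A = ?B * ?A * ?B"
    unfolding Z Z' using epos vd_lt[OF s3(2)] vd_lt[OF t3(2)]
    by (subst mmat_eq_iff) (auto simp: actp_def actx_def swp_def gy_def tx_def)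
  show "?A * ?B * ?A \<in> Geen e n" unfolding Z using vd_Geen[OF epos s3(2)] .
  have F1: "Fd e n (actp r (\<lambda>a. a)) (actx r i (\<lambda>_. 0)) = 1"
    using s1(3) by (simp add: Fd_one phi_def)
  have F2: "Fd e n (actp (Suc r) (actp r (\<lambda>a. a))) (actx (Suc r) 0 (actx r i (\<lambda>_. 0))) = 2"
    using s2(3) F1 by (simp add: phi_def gy_big)
  have F3: "Fd e n ?p3 ?x3 = 3"
    using s3(3) F2 by (simp add: phi_def gy_big)
  show "wlen e n (?A * ?B * ?A) = 3" unfolding Z wlen_mmat[OF epos n2 s3(2)] using F3 .
  have G1: "Fd e n (actp (Suc r) (\<lambda>a. a)) (actx (Suc r) 0 (\<lambda>_. 0)) = 1"
    using t1(3) by (simp add: Fd_one phi_def)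
  have G2: "Fd e n (actp r (actp (Suc r) (\<lambda>a. a))) (actx r i (actx (Suc r) 0 (\<lambda>_. 0))) = 2"
    using t2(3) G1 by (simp add: phi_def gy_big)
  have "?A * ?B = ?A * (?B * ?I)" using BI by simp
  then show "wlen e n (?A * ?B) = 2" using t1(1) t2(1) wlen_mmat[OF epos n2 t2(2)] G2 by simp
  have "?B * ?A = ?B * (?A * ?I)" using AI by simp
  then show "wlen e n (?B * ?A) = 2" using s1(1) s2(1) wlen_mmat[OF epos n2 s2(2)] F2 by simp
  have gA: "ginv e n ?A = ?A" and gB: "ginv e n ?B = ?B" using ginv_gen[OF epos n2] r1 r by auto
  have GA: "?A \<in> Geen e n" and GB: "?B \<in> Geen e n" using gen_Geen[OF epos n2] r1 r by auto
  have "ginv e n (?A * ?B * ?A) = ginv e n ?A * ginv e n (?A * ?B)"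
    using ginv_mult[OF epos n2 Geen_mult[OF epos n2 GA GB] GA] .
  also have "\<dots> = ?A * (?B * ?A)" using ginv_mult[OF epos n2 GA GB] gA gB by simp
  also have "\<dots> = ?A * ?B * ?A" using assoc3[OF cA cB cA] by simp
  finally show gZ: "ginv e n (?A * ?B * ?A) = ?A * ?B * ?A" .
  show "\<exists>p x. vd e n p x \<and> ?A * ?B * ?A = mmat e n p x \<and> (\<forall>kap. Icond e n kap p x)"
  proof (intro exI conjI allI)
    show "vd e n ?p3 ?x3" using s3(2) .
    show "?A * ?B * ?A = mmat e n ?p3 ?x3" using Z .
    fix kap show "Icond e n kap ?p3 ?x3"
      unfolding Icond_def by (auto simp: actp_def actx_def swp_def gy_def tx_def)
  qed
  fix w assume w: "w \<in> Geen e n" and pA: "prefix_le e n ?A w" and pB: "prefix_le e n ?B w"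
  obtain p x where v: "vd e n p x" and wpx: "w = mmat e n p x" using Geen_vd[OF epos w] by blast
  note u1 = step[OF epos n2 r1 v, of i]
  note u2 = step[OF epos n2 r u1(2), of 0]
  note u3 = step[OF epos n2 r1 u2(2), of i]
  have dA: "phi e (p (Suc r)) (p r) (gy r i (Suc r) + x r) + 1 = phi e (p r) (p (Suc r)) (x (Suc r))"
    using desc_of_prefix[OF epos n2 r1 v] pA wpx by simp
  have dB: "phi e (p (Suc (Suc r))) (p (Suc r)) (x (Suc r)) + 1 = phi e (p (Suc r)) (p (Suc (Suc r))) (x (Suc (Suc r)))"
    using desc_of_prefix[OF epos n2 r v, of 0] pB wpx by simp
  have bp: "bij_betw p {..<n} {..<n}" using v by (simp add: vd_def)
  have ne: "p r \<noteq> p (Suc r)" "p (Suc r) \<noteq> p (Suc (Suc r))" "p r \<noteq> p (Suc (Suc r))"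
    using bij_neq[OF bp] r by auto
  have key: "phi e (p r) (p (Suc (Suc r))) (x (Suc (Suc r))) = phi e (p (Suc (Suc r))) (p r) (gy r i (Suc r) + x r) + 1"
    by (rule braid_phi[OF ne(1) ne(2) ne(3) dA dB])
  let ?p1 = "actp r p" and ?x1 = "actx r i x"
  let ?p2 = "actp (Suc r) ?p1" and ?x2 = "actx (Suc r) 0 ?x1"
  let ?c = "gy r i (Suc r)"
  have e1: "Fd e n ?p1 ?x1 + phi e (p r) (p (Suc r)) (x (Suc r)) = Fd e n p x + phi e (p (Suc r)) (p r) (?c + x r)"
    using u1(3) .
  have e2: "Fd e n ?p2 ?x2 + phi e (p r) (p (Suc (Suc r))) (x (Suc (Suc r))) = Fd e n ?p1 ?x1 + phi e (p (Suc (Suc r))) (p r) (?c + x r)"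
    using u2(3) by (simp add: gy_big)
  have e3: "Fd e n (actp r ?p2) (actx r i ?x2) + phi e (p (Suc r)) (p (Suc (Suc r))) (x (Suc (Suc r))) = Fd e n ?p2 ?x2 + phi e (p (Suc (Suc r))) (p (Suc r)) (x (Suc r))"
    using u3(3) by (simp add: gy_big gy_r)
  have F: "Fd e n (actp r ?p2) (actx r i ?x2) + 3 = Fd e n p x"
    using e1 e2 e3 dA dB key by linarith
  have cw: "w \<in> carrier_mat n n" using wpx by simp
  have c1: "?A * ?B \<in> carrier_mat n n" by (rule mult_carrier_mat[OF cA cB])
  have "ginv e n (?A * ?B * ?A) * w = (?A * ?B) * (?A * w)" unfolding gZ using assoc3[OF c1 cA cw] .
  also have "\<dots> = ?A * (?B * (?A * w))" using assoc3[OF cA cB mult_carrier_mat[OF cA cw]] .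
  also have "\<dots> = mmat e n (actp r ?p2) (actx r i ?x2)" using wpx u1(1) u2(1) u3(1) by simp
  finally have gz: "ginv e n (?A * ?B * ?A) * mmat e n p x = mmat e n (actp r ?p2) (actx r i ?x2)" using wpx by simp
  show "prefix_le e n (?A * ?B * ?A) w"
    unfolding wpx
    by (rule prefix_by_data[OF epos n2 v _ _ gz u3(2)])
      (use Z vd_Geen[OF epos s3(2)] wlen_mmat[OF epos n2 s3(2)] F3 F in auto)
qed

end


lemma int_dvd_eq: "0 \<le> i \<Longrightarrow> i < int e \<Longrightarrow> 0 \<le> j \<Longrightarrow> j < int e \<Longrightarrow> int e dvd (i - j) \<Longrightarrow> i = j"
  by (metis mod_eq_dvd_iff mod_pos_pos_trivial)

context
  fixes e n :: nat
  assumes epos: "0 < e" and n2: "2 \<le> n"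
begin

lemma comm_case:
  assumes r12: "Suc r1 < r2" and r2: "Suc r2 < n"
  shows "Gm e n r1 i * Gm e n r2 0 = Gm e n r2 0 * Gm e n r1 i"
    and "Gm e n r1 i * Gm e n r2 0 \<in> Geen e n"
    and "wlen e n (Gm e n r1 i * Gm e n r2 0) = 2"
    and "ginv e n (Gm e n r1 i * Gm e n r2 0) = Gm e n r1 i * Gm e n r2 0"
    and "\<And>w. w \<in> Geen e n \<Longrightarrow> prefix_le e n (Gm e n r1 i) w \<Longrightarrow> prefix_le e n (Gm e n r2 0) w \<Longrightarrow>
          prefix_le e n (Gm e n r1 i * Gm e n r2 0) w"
    and "\<exists>p x. vd e n p x \<and> Gm e n r1 i * Gm e n r2 0 = mmat e n p x \<and> (\<forall>kap. Icond e n kap p x)"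
proof -
  let ?A = "Gm e n r1 i" and ?B = "Gm e n r2 0" and ?I = "mmat e n (\<lambda>a. a) (\<lambda>_. 0)"
  have r1: "Suc r1 < n" using r12 r2 by simp
  have r20: "r2 \<noteq> 0" using r12 by simp
  have cA: "?A \<in> carrier_mat n n" and cB: "?B \<in> carrier_mat n n" by simp_all
  have AI: "?A = ?A * ?I" and BI: "?B = ?B * ?I" using Gm_one[OF epos n2] by blast+
  note t1 = step[OF epos n2 r2 vd_one[OF epos n2], of 0]
  note t2 = step[OF epos n2 r1 t1(2), of i]
  note s1 = step[OF epos n2 r1 vd_one[OF epos n2], of i]
  note s2 = step[OF epos n2 r2 s1(2), of 0]
  have Z: "?A * ?B = mmat e n (actp r1 (actp r2 (\<lambda>a. a))) (actx r1 i (actx r2 0 (\<lambda>_. 0)))"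
    using BI t1(1) t2(1) by simp
  have Z': "?B * ?A = mmat e n (actp r2 (actp r1 (\<lambda>a. a))) (actx r2 0 (actx r1 i (\<lambda>_. 0)))"
    using AI s1(1) s2(1) by simp
  show AB: "?A * ?B = ?B * ?A"
    unfolding Z Z' using epos vd_lt[OF s2(2)] vd_lt[OF t2(2)] r12
    by (subst mmat_eq_iff) (auto simp: actp_def actx_def swp_def gy_def tx_def)
  show "?A * ?B \<in> Geen e n" unfolding Z using vd_Geen[OF epos t2(2)] .
  have G1: "Fd e n (actp r2 (\<lambda>a. a)) (actx r2 0 (\<lambda>_. 0)) = 1"
    using t1(3) by (simp add: Fd_one phi_def)
  have G2: "Fd e n (actp r1 (actp r2 (\<lambda>a. a))) (actx r1 i (actx r2 0 (\<lambda>_. 0))) = 2"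
    using t2(3) G1 r12 by (simp add: phi_def gy_small gy0[OF r20])
  show wl: "wlen e n (?A * ?B) = 2" unfolding Z wlen_mmat[OF epos n2 t2(2)] using G2 .
  have gA: "ginv e n ?A = ?A" and gB: "ginv e n ?B = ?B" using ginv_gen[OF epos n2] r1 r2 by auto
  have GA: "?A \<in> Geen e n" and GB: "?B \<in> Geen e n" using gen_Geen[OF epos n2] r1 r2 by auto
  show gZ: "ginv e n (?A * ?B) = ?A * ?B" using ginv_mult[OF epos n2 GA GB] gA gB AB by simp
  show "\<exists>p x. vd e n p x \<and> ?A * ?B = mmat e n p x \<and> (\<forall>kap. Icond e n kap p x)"
  proof (intro exI conjI allI)
    show "vd e n (actp r1 (actp r2 (\<lambda>a. a))) (actx r1 i (actx r2 0 (\<lambda>_. 0)))" using t2(2) .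
    show "?A * ?B = mmat e n (actp r1 (actp r2 (\<lambda>a. a))) (actx r1 i (actx r2 0 (\<lambda>_. 0)))" using Z .
    fix kap show "Icond e n kap (actp r1 (actp r2 (\<lambda>a. a))) (actx r1 i (actx r2 0 (\<lambda>_. 0)))"
      unfolding Icond_def using r12 by (auto simp: actp_def actx_def swp_def gy_def tx_def)
  qed
  fix w assume w: "w \<in> Geen e n" and pA: "prefix_le e n ?A w" and pB: "prefix_le e n ?B w"
  obtain p x where v: "vd e n p x" and wpx: "w = mmat e n p x" using Geen_vd[OF epos w] by blast
  note u1 = step[OF epos n2 r1 v, of i]
  note u2 = step[OF epos n2 r2 u1(2), of 0]
  have dA: "phi e (p (Suc r1)) (p r1) (gy r1 i (Suc r1) + x r1) + 1 = phi e (p r1) (p (Suc r1)) (x (Suc r1))"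
    using desc_of_prefix[OF epos n2 r1 v] pA wpx by simp
  have dB: "phi e (p (Suc r2)) (p r2) (x r2) + 1 = phi e (p r2) (p (Suc r2)) (x (Suc r2))"
    using desc_of_prefix[OF epos n2 r2 v, of 0] pB wpx by (simp add: gy0[OF r20])
  have e2: "Fd e n (actp r2 (actp r1 p)) (actx r2 0 (actx r1 i x)) + phi e (p r2) (p (Suc r2)) (x (Suc r2))
      = Fd e n (actp r1 p) (actx r1 i x) + phi e (p (Suc r2)) (p r2) (x r2)"
    using u2(3) r12 by (simp add: gy_big gy0[OF r20])
  have F: "Fd e n (actp r2 (actp r1 p)) (actx r2 0 (actx r1 i x)) + 2 = Fd e n p x"
    using u1(3) e2 dA dB by linarith
  have cw: "w \<in> carrier_mat n n" using wpx by simp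
  have "ginv e n (?A * ?B) * w = (?B * ?A) * w" using gZ AB by simp
  also have "\<dots> = ?B * (?A * w)" using assoc3[OF epos n2 cB cA cw] .
  also have "\<dots> = mmat e n (actp r2 (actp r1 p)) (actx r2 0 (actx r1 i x))" using wpx u1(1) u2(1) by simp
  finally have gz: "ginv e n (?A * ?B) * mmat e n p x = mmat e n (actp r2 (actp r1 p)) (actx r2 0 (actx r1 i x))"
    using wpx by simp
  show "prefix_le e n (?A * ?B) w"
    unfolding wpx
    by (rule prefix_by_data[OF epos n2 v _ _ gz u2(2)])
      (use Z vd_Geen[OF epos t2(2)] wl F in auto)
qed

lemma tt_case:
  assumes nd: "\<not> int e dvd (a - b)"
  shows "Gm e n 0 a * Gm e n 0 b \<in> Geen e n"
    and "wlen e n (Gm e n 0 a * Gm e n 0 b) = 2"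
    and "Gm e n 0 a * Gm e n 0 b = mmat e n (actp 0 (actp 0 (\<lambda>a. a))) (actx 0 a (actx 0 b (\<lambda>_. 0)))"
    and "vd e n (actp 0 (actp 0 (\<lambda>a. a))) (actx 0 a (actx 0 b (\<lambda>_. 0)))"
    and "\<And>kap. int e dvd (kap - (a - b)) \<Longrightarrow> Icond e n kap (actp 0 (actp 0 (\<lambda>a. a))) (actx 0 a (actx 0 b (\<lambda>_. 0)))"
proof -
  let ?A = "Gm e n 0 a" and ?B = "Gm e n 0 b" and ?I = "mmat e n (\<lambda>a. a) (\<lambda>_. 0)"
  have r1: "Suc 0 < n" using n2 by simp
  have BI: "?B = ?B * ?I" using Gm_one[OF epos n2] by blast
  note t1 = step[OF epos n2 r1 vd_one[OF epos n2], of b]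
  note t2 = step[OF epos n2 r1 t1(2), of a]
  show Z: "?A * ?B = mmat e n (actp 0 (actp 0 (\<lambda>a. a))) (actx 0 a (actx 0 b (\<lambda>_. 0)))"
    using BI t1(1) t2(1) by simp
  show "vd e n (actp 0 (actp 0 (\<lambda>a. a))) (actx 0 a (actx 0 b (\<lambda>_. 0)))" using t2(2) .
  show "?A * ?B \<in> Geen e n" unfolding Z using vd_Geen[OF epos t2(2)] .
  have G1: "Fd e n (actp 0 (\<lambda>a. a)) (actx 0 b (\<lambda>_. 0)) = 1"
    using t1(3) by (simp add: Fd_one phi_def)
  have G2: "Fd e n (actp 0 (actp 0 (\<lambda>a. a))) (actx 0 a (actx 0 b (\<lambda>_. 0))) = 2"
    using t2(3) G1 nd by (simp add: phi_def gy_def tx_def)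
  show "wlen e n (?A * ?B) = 2" unfolding Z wlen_mmat[OF epos n2 t2(2)] using G2 .
  fix kap assume kd: "int e dvd (kap - (a - b))"
  show "Icond e n kap (actp 0 (actp 0 (\<lambda>a. a))) (actx 0 a (actx 0 b (\<lambda>_. 0)))"
    unfolding Icond_def
  proof (intro allI impI)
    fix a' b' assume h: "a' < b'" "b' < n" "actp 0 (actp 0 (\<lambda>a. a)) a' < actp 0 (actp 0 (\<lambda>a. a)) b'"
    show "int e dvd actx 0 a (actx 0 b (\<lambda>_. 0)) b' \<or> int e dvd (kap - actx 0 a (actx 0 b (\<lambda>_. 0)) b')"
    proof (cases "b' = 1")
      case True then show ?thesis using kd by (simp add: gy_def tx_def)
    next
      case False then show ?thesis using h by (simp add: actx_def swp_def gy_def tx_def)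
    qed
  qed
qed

lemma tt_least:
  assumes v: "vd e n p x" and ic: "Icond e n kap p x"
    and ij: "0 \<le> i" "i < int e" "0 \<le> j" "j < int e" "i \<noteq> j"
    and pi: "prefix_le e n (Gm e n 0 i) (mmat e n p x)" and pj: "prefix_le e n (Gm e n 0 j) (mmat e n p x)"
    and ab: "int e dvd (a - b - kap)" and nd: "\<not> int e dvd (a - b)"
  shows "prefix_le e n (Gm e n 0 a * Gm e n 0 b) (mmat e n p x)"
proof -
  let ?A = "Gm e n 0 a" and ?B = "Gm e n 0 b"
  have r1: "Suc 0 < n" using n2 by simp
  have di: "phi e (p 1) (p 0) (i + x 0) + 1 = phi e (p 0) (p 1) (x 1)"
    using desc_of_prefix[OF epos n2 r1 v pi] by (simp add: gy_t)
  have dj: "phi e (p 1) (p 0) (j + x 0) + 1 = phi e (p 0) (p 1) (x 1)"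
    using desc_of_prefix[OF epos n2 r1 v pj] by (simp add: gy_t)
  have bp: "bij_betw p {..<n} {..<n}" using v by (simp add: vd_def)
  have ne: "p 0 \<noteq> p 1" using bij_neq[OF bp, of 0 1] r1 by simp
  have lt: "p 0 < p 1"
  proof (rule ccontr)
    assume "\<not> p 0 < p 1"
    then have "p 1 < p 0" using ne by simp
    then have "int e dvd (i + x 0)" "int e dvd (j + x 0)" using di dj by (auto simp: phi_def split: if_splits)
    then have "int e dvd (i - j)" by (metis add_diff_cancel_right diff_diff_eq2 dvd_diff)
    then show False using int_dvd_eq ij by blast
  qed
  have nx1: "\<not> int e dvd x 1" using di lt by (auto simp: phi_def split: if_splits)
  have "int e dvd (kap - x 1)" using ic lt nx1 r1 unfolding Icond_def by auto
  then have "int e dvd ((kap - x 1) + (a - b - kap))" using ab by (rule dvd_add)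
  moreover have "b + (- a + x 1) = - ((kap - x 1) + (a - b - kap))" by simp
  ultimately have d2: "int e dvd (b + (- a + x 1))" by (metis dvd_minus_iff)
  note u1 = step[OF epos n2 r1 v, of a]
  note u2 = step[OF epos n2 r1 u1(2), of b]
  have e2: "Fd e n (actp 0 (actp 0 p)) (actx 0 b (actx 0 a x)) + phi e (p 1) (p 0) (a + x 0)
      = Fd e n (actp 0 p) (actx 0 a x) + phi e (p 0) (p 1) (b + (- a + x 1))"
    using u2(3) by (simp add: gy_def tx_def)
  have e1: "Fd e n (actp 0 p) (actx 0 a x) + phi e (p 0) (p 1) (x 1) = Fd e n p x + phi e (p 1) (p 0) (a + x 0)"
    using u1(3) by (simp add: gy_def tx_def)
  have F: "Fd e n (actp 0 (actp 0 p)) (actx 0 b (actx 0 a x)) + 2 = Fd e n p x"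
    using e1 e2 lt nx1 d2 by (simp add: phi_def)
  have GA: "?A \<in> Geen e n" and GB: "?B \<in> Geen e n" using gen_Geen[OF epos n2] r1 by auto
  have cA: "?A \<in> carrier_mat n n" and cB: "?B \<in> carrier_mat n n" by simp_all
  have "ginv e n (?A * ?B) * mmat e n p x = (?B * ?A) * mmat e n p x"
    using ginv_mult[OF epos n2 GA GB] ginv_gen[OF epos n2 r1] by simp
  also have "\<dots> = ?B * (?A * mmat e n p x)" using assoc3[OF epos n2 cB cA mc[OF epos n2]] .
  also have "\<dots> = mmat e n (actp 0 (actp 0 p)) (actx 0 b (actx 0 a x))" using u1(1) u2(1) by simp
  finally have gz: "ginv e n (?A * ?B) * mmat e n p x = mmat e n (actp 0 (actp 0 p)) (actx 0 b (actx 0 a x))" .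
  show ?thesis
    by (rule prefix_by_data[OF epos n2 v _ _ gz u2(2)])
      (use tt_case(1,2)[OF nd] F in auto)
qed

end


context
  fixes e n k :: nat
  assumes epos: "0 < e" and n2: "2 \<le> n" and k1: "1 \<le> k" and ke: "k < e"
begin

lemma mem_S: assumes "vd e n p x" "Icond e n (int k) p x"
  shows "mmat e n p x \<in> interval e n (lam e n ^\<^sub>m k)"
  using interval_char[OF epos n2 k1 ke assms(1)] assms(2) by simp

lemma S_Geen: "w \<in> interval e n (lam e n ^\<^sub>m k) \<Longrightarrow> w \<in> Geen e n"
  by (simp add: interval_def)

lemma lub_universal:
  assumes xG: "x \<in> Geen e n" and yG: "y \<in> Geen e n" and zG: "z \<in> Geen e n"
    and gx: "ginv e n x = x" and gy: "ginv e n y = y" and gz: "ginv e n z = z"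
    and zS: "z \<in> interval e n (lam e n ^\<^sub>m k)"
    and px: "prefix_le e n x z" and py: "prefix_le e n y z"
    and sx: "suffix_le e n x z" and sy: "suffix_le e n y z"
    and least: "\<And>w. w \<in> Geen e n \<Longrightarrow> prefix_le e n x w \<Longrightarrow> prefix_le e n y w \<Longrightarrow> prefix_le e n z w"
  shows "lub_both e n k x y z"
proof (rule lub_both_intro[OF zS px py _ sx sy])
  fix w assume "w \<in> interval e n (lam e n ^\<^sub>m k)" "prefix_le e n x w" "prefix_le e n y w"
  then show "prefix_le e n z w" using least S_Geen by blast
next
  fix w assume wS: "w \<in> interval e n (lam e n ^\<^sub>m k)" and a: "suffix_le e n x w" "suffix_le e n y w"
  have wG: "w \<in> Geen e n" using S_Geen[OF wS] .
  have "prefix_le e n x (ginv e n w)" "prefix_le e n y (ginv e n w)"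
    using a suffix_iff[OF epos n2 xG wG] suffix_iff[OF epos n2 yG wG] gx gy by simp_all
  then have "prefix_le e n z (ginv e n w)" using least ginv_props(1)[OF epos n2 wG] by blast
  then show "suffix_le e n z w" using suffix_iff[OF epos n2 zG wG] gz by simp
qed

lemma braid_lub:
  assumes r: "Suc (Suc r) < n"
  shows "lub_both e n k (Gm e n r i) (Gm e n (Suc r) 0) (Gm e n r i * Gm e n (Suc r) 0 * Gm e n r i)"
proof -
  let ?A = "Gm e n r i" and ?B = "Gm e n (Suc r) 0"
  have r1: "Suc r < n" using r by simp
  note bc = braid_case[OF epos n2 r, where i = i]
  have GA: "?A \<in> Geen e n" and GB: "?B \<in> Geen e n" using gen_Geen[OF epos n2] r1 r by auto
  have cA: "?A \<in> carrier_mat n n" and cB: "?B \<in> carrier_mat n n" by simp_all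
  have zS: "?A * ?B * ?A \<in> interval e n (lam e n ^\<^sub>m k)"
  proof -
    obtain p x where "vd e n p x" "?A * ?B * ?A = mmat e n p x" "\<forall>kap. Icond e n kap p x" using bc(8) by blast
    then show ?thesis using mem_S by simp
  qed
  have "prefix_le e n ?A (?A * (?B * ?A))"
    by (rule prefix_gen[OF epos n2 r1 Geen_mult[OF epos n2 GB GA]])
      (use bc(3,5) assoc3[OF epos n2 cA cB cA] in simp)
  then have px: "prefix_le e n ?A (?A * ?B * ?A)" using assoc3[OF epos n2 cA cB cA] by simp
  have "prefix_le e n ?B (?B * (?A * ?B))"
    by (rule prefix_gen[OF epos n2 r Geen_mult[OF epos n2 GA GB]])
      (use bc(1,3,4) assoc3[OF epos n2 cB cA cB] in simp)
  then have py: "prefix_le e n ?B (?A * ?B * ?A)" using assoc3[OF epos n2 cB cA cB] bc(1) by simp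
  have sx: "suffix_le e n ?A (?A * ?B * ?A)"
    by (rule suffix_gen[OF epos n2 r1 Geen_mult[OF epos n2 GA GB]]) (use bc(3,4) in simp)
  have "suffix_le e n ?B (?B * ?A * ?B)"
    by (rule suffix_gen[OF epos n2 r Geen_mult[OF epos n2 GB GA]]) (use bc(1,3,5) in simp)
  then have sy: "suffix_le e n ?B (?A * ?B * ?A)" using bc(1) by simp
  show ?thesis
    by (rule lub_universal[OF GA GB bc(2) ginv_gen[OF epos n2 r1] ginv_gen[OF epos n2 r] bc(6) zS px py sx sy bc(7)])
qed

lemma comm_lub:
  assumes r12: "Suc r1 < r2" and r2: "Suc r2 < n"
  shows "lub_both e n k (Gm e n r1 i) (Gm e n r2 0) (Gm e n r1 i * Gm e n r2 0)"
proof -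
  let ?A = "Gm e n r1 i" and ?B = "Gm e n r2 0"
  have r1: "Suc r1 < n" using r12 r2 by simp
  note cc = comm_case[OF epos n2 r12 r2, where i = i]
  have GA: "?A \<in> Geen e n" and GB: "?B \<in> Geen e n" using gen_Geen[OF epos n2] r1 r2 by auto
  have zS: "?A * ?B \<in> interval e n (lam e n ^\<^sub>m k)"
  proof -
    obtain p x where "vd e n p x" "?A * ?B = mmat e n p x" "\<forall>kap. Icond e n kap p x" using cc(6) by blast
    then show ?thesis using mem_S by simp
  qed
  have px: "prefix_le e n ?A (?A * ?B)"
    by (rule prefix_gen[OF epos n2 r1 GB]) (use cc(3) wlen_gen[OF epos n2 r2] in simp)
  have "prefix_le e n ?B (?B * ?A)"
    by (rule prefix_gen[OF epos n2 r2 GA]) (use cc(1,3) wlen_gen[OF epos n2 r1] in simp)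
  then have py: "prefix_le e n ?B (?A * ?B)" using cc(1) by simp
  have sy: "suffix_le e n ?B (?A * ?B)"
    by (rule suffix_gen[OF epos n2 r2 GA]) (use cc(3) wlen_gen[OF epos n2 r1] in simp)
  have "suffix_le e n ?A (?B * ?A)"
    by (rule suffix_gen[OF epos n2 r1 GB]) (use cc(1,3) wlen_gen[OF epos n2 r2] in simp)
  then have sx: "suffix_le e n ?A (?A * ?B)" using cc(1) by simp
  show ?thesis
    by (rule lub_universal[OF GA GB cc(2) ginv_gen[OF epos n2 r1] ginv_gen[OF epos n2 r2] cc(4) zS px py sx sy cc(5)])
qed

lemma tt_eq: assumes "a - b = c - d"
  shows "Gm e n 0 a * Gm e n 0 b = Gm e n 0 c * Gm e n 0 d"
proof -
  let ?I = "mmat e n (\<lambda>a. a) (\<lambda>_. 0)"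
  have r1: "Suc 0 < n" using n2 by simp
  have "Gm e n 0 a * Gm e n 0 b = Gm e n 0 a * (Gm e n 0 b * ?I)" using Gm_one[OF epos n2, of 0 b] by simp
  also have "\<dots> = mmat e n (actp 0 (actp 0 (\<lambda>a. a))) (actx 0 a (actx 0 b (\<lambda>_. 0)))"
    using step(1)[OF epos n2 r1 vd_one[OF epos n2]] step(1)[OF epos n2 r1 step(2)[OF epos n2 r1 vd_one[OF epos n2]]] by simp
  also have "actx 0 a (actx 0 b (\<lambda>_. 0)) = actx 0 c (actx 0 d (\<lambda>_. 0))"
    using assms by (auto simp: actx_def swp_def gy_def tx_def algebra_simps)
  also have "mmat e n (actp 0 (actp 0 (\<lambda>a. a))) (actx 0 c (actx 0 d (\<lambda>_. 0))) = Gm e n 0 c * (Gm e n 0 d * ?I)"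
    using step(1)[OF epos n2 r1 vd_one[OF epos n2]] step(1)[OF epos n2 r1 step(2)[OF epos n2 r1 vd_one[OF epos n2]]] by simp
  also have "\<dots> = Gm e n 0 c * Gm e n 0 d" using Gm_one[OF epos n2, of 0 d] by simp
  finally show ?thesis .
qed

lemma tt_lub:
  assumes ij: "0 \<le> i" "i < int e" "0 \<le> j" "j < int e" "i \<noteq> j"
  shows "lub_both e n k (Gm e n 0 i) (Gm e n 0 j) (Gm e n 0 (int k) * Gm e n 0 0)"
proof -
  let ?T = "Gm e n 0"
  have r1: "Suc 0 < n" using n2 by simp
  have ndk: "\<not> int e dvd int k" using not_dvd_k k1 ke by simp
  have nd: "\<not> int e dvd (int k - 0)" using ndk by simp
  note tc = tt_case[OF epos n2 nd]
  have GT: "\<And>a. ?T a \<in> Geen e n" using gen_Geen[OF epos n2 r1] .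
  have zS: "?T (int k) * ?T 0 \<in> interval e n (lam e n ^\<^sub>m k)"
    using tc(3,4) tc(5)[of "int k"] mem_S by simp
  have pre: "prefix_le e n (?T a) (?T (int k) * ?T 0)" for a
  proof -
    have eq: "?T (int k) * ?T 0 = ?T a * ?T (a - int k)" by (rule tt_eq) simp
    have nd': "\<not> int e dvd (a - (a - int k))" using ndk by simp
    show ?thesis unfolding eq
      by (rule prefix_gen[OF epos n2 r1 GT]) (use tt_case(2)[OF epos n2 nd'] wlen_gen[OF epos n2 r1] in simp)
  qed
  have suf: "suffix_le e n (?T a) (?T (int k) * ?T 0)" for a
  proof -
    have eq: "?T (int k) * ?T 0 = ?T (a + int k) * ?T a" by (rule tt_eq) simp
    have nd': "\<not> int e dvd (a + int k - a)" using ndk by simp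
    show ?thesis unfolding eq
      by (rule suffix_gen[OF epos n2 r1 GT]) (use tt_case(2)[OF epos n2 nd'] wlen_gen[OF epos n2 r1] in simp)
  qed
  show ?thesis
  proof (rule lub_both_intro[OF zS pre pre _ suf suf])
    fix w assume wS: "w \<in> interval e n (lam e n ^\<^sub>m k)" and a: "prefix_le e n (?T i) w" "prefix_le e n (?T j) w"
    obtain p x where v: "vd e n p x" and wpx: "w = mmat e n p x" using Geen_vd[OF epos S_Geen[OF wS]] by blast
    have ic: "Icond e n (int k) p x" using interval_char[OF epos n2 k1 ke v] wS wpx by simp
    show "prefix_le e n (?T (int k) * ?T 0) w"
      unfolding wpx by (rule tt_least[OF epos n2 v ic ij]) (use a wpx nd in simp_all)
  next
    fix w assume wS: "w \<in> interval e n (lam e n ^\<^sub>m k)" and a: "suffix_le e n (?T i) w" "suffix_le e n (?T j) w"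
    have wG: "w \<in> Geen e n" using S_Geen[OF wS] .
    obtain p x where v: "vd e n p x" and wpx: "w = mmat e n p x" using Geen_vd[OF epos wG] by blast
    have ic: "Icond e n (int k) p x" using interval_char[OF epos n2 k1 ke v] wS wpx by simp
    have bp: "bij_betw p {..<n} {..<n}" using v by (simp add: vd_def)
    have gw: "ginv e n w = mmat e n (pinv n p) (\<lambda>c. - x (pinv n p c))" using ginv_mmat[OF epos v] wpx by simp
    have ic': "Icond e n (- int k) (pinv n p) (\<lambda>c. - x (pinv n p c))" using Icond_inv[OF bp ic] .
    have b: "prefix_le e n (?T i) (ginv e n w)" "prefix_le e n (?T j) (ginv e n w)"
      using a suffix_iff[OF epos n2 GT wG] ginv_gen[OF epos n2 r1] by simp_all
    have nd2: "\<not> int e dvd (0 - int k)" using ndk by simp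
    have "prefix_le e n (?T 0 * ?T (int k)) (ginv e n w)"
      unfolding gw by (rule tt_least[OF epos n2 vd_inv[OF v] ic' ij]) (use b gw nd2 in simp_all)
    moreover have "ginv e n (?T (int k) * ?T 0) = ?T 0 * ?T (int k)"
      using ginv_mult[OF epos n2 GT GT] ginv_gen[OF epos n2 r1] by simp
    ultimately show "suffix_le e n (?T (int k) * ?T 0) w"
      using suffix_iff[OF epos n2 Geen_mult[OF epos n2 GT GT] wG] by simp
  qed
qed

end


lemma tgen_Gm: "2 \<le> n \<Longrightarrow> tgen e n i = Gm e n 0 i"
  using tgen_mmat by (simp add: gy_def)

lemma sgen_Gm: "3 \<le> j \<Longrightarrow> j \<le> n \<Longrightarrow> sgen n j = Gm e n (j - 2) 0"
proof -
  assume j: "3 \<le> j" "j \<le> n"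
  have "j - 1 = Suc (j - 2)" "j - 2 \<noteq> 0" using j by auto
  then show ?thesis using sgen_mmat[OF j, of e] by (simp add: gy_def)
qed

context
  fixes e n k :: nat
  assumes epos: "0 < e" and n2: "2 \<le> n" and k1: "1 \<le> k" and ke: "k < e"
begin

lemma C2: assumes "0 \<le> i" "i < int e" "0 \<le> j" "j < int e" "i \<noteq> j"
  shows "lub_both e n k (tgen e n i) (tgen e n j) (tgen e n (int k) * tgen e n 0)
        \<and> tgen e n (int k) * tgen e n 0 = tgen e n i * tgen e n (i - int k)
        \<and> tgen e n (int k) * tgen e n 0 = tgen e n j * tgen e n (j - int k)"
  unfolding tgen_Gm[OF n2]
  using tt_lub[OF epos n2 k1 ke assms] tt_eq[OF epos n2 k1 ke, of "int k" 0 i "i - int k"]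
    tt_eq[OF epos n2 k1 ke, of "int k" 0 j "j - int k"] by simp

lemma C3: assumes "3 \<le> n" "0 \<le> i" "i < int e"
  shows "lub_both e n k (tgen e n i) (sgen n 3) (tgen e n i * sgen n 3 * tgen e n i)
        \<and> tgen e n i * sgen n 3 * tgen e n i = sgen n 3 * tgen e n i * sgen n 3"
proof -
  have r: "Suc (Suc 0) < n" using assms by simp
  have s3: "sgen n 3 = Gm e n (Suc 0) 0" using sgen_Gm[of 3 n e] assms by simp
  show ?thesis unfolding tgen_Gm[OF n2] s3
    using braid_lub[OF epos n2 k1 ke r, of i] braid_case(1)[OF epos n2 r, of i] by simp
qed

lemma C4: assumes "0 \<le> i" "i < int e" "4 \<le> j" "j \<le> n"
  shows "lub_both e n k (tgen e n i) (sgen n j) (tgen e n i * sgen n j)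
        \<and> tgen e n i * sgen n j = sgen n j * tgen e n i"
proof -
  have r12: "Suc 0 < j - 2" and r2: "Suc (j - 2) < n" using assms by auto
  have sj: "sgen n j = Gm e n (j - 2) 0" using sgen_Gm[of j n e] assms by simp
  show ?thesis unfolding tgen_Gm[OF n2] sj
    using comm_lub[OF epos n2 k1 ke r12 r2, of i] comm_case(1)[OF epos n2 r12 r2, of i] by simp
qed

lemma C5: assumes "3 \<le> i" "i \<le> n - 1"
  shows "lub_both e n k (sgen n i) (sgen n (i + 1)) (sgen n i * sgen n (i + 1) * sgen n i)
        \<and> sgen n i * sgen n (i + 1) * sgen n i = sgen n (i + 1) * sgen n i * sgen n (i + 1)"
proof -
  have r: "Suc (Suc (i - 2)) < n" using assms by auto
  have si: "sgen n i = Gm e n (i - 2) 0" using sgen_Gm[of i n e] assms by simp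
  have si1: "sgen n (i + 1) = Gm e n (Suc (i - 2)) 0"
  proof -
    have h: "i + 1 - 2 = Suc (i - 2)" using assms by simp
    have "sgen n (i + 1) = Gm e n (i + 1 - 2) 0" by (rule sgen_Gm) (use assms in simp_all)
    with h show ?thesis by simp
  qed
  show ?thesis unfolding si si1
    using braid_lub[OF epos n2 k1 ke r, of 0] braid_case(1)[OF epos n2 r, of 0] by simp
qed

lemma C6: assumes "3 \<le> i" "i \<le> n" "3 \<le> j" "j \<le> n" "i + 1 < j \<or> j + 1 < i"
  shows "lub_both e n k (sgen n i) (sgen n j) (sgen n i * sgen n j)
        \<and> sgen n i * sgen n j = sgen n j * sgen n i"
proof -
  have si: "sgen n i = Gm e n (i - 2) 0" using sgen_Gm[of i n e] assms by simp
  have sj: "sgen n j = Gm e n (j - 2) 0" using sgen_Gm[of j n e] assms by simp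
  show ?thesis
  proof (cases "i + 1 < j")
    case True
    have r12: "Suc (i - 2) < j - 2" and r2: "Suc (j - 2) < n" using assms True by auto
    show ?thesis unfolding si sj
      using comm_lub[OF epos n2 k1 ke r12 r2, of 0] comm_case(1)[OF epos n2 r12 r2, of 0] by simp
  next
    case False
    then have ji: "j + 1 < i" using assms by simp
    have r12: "Suc (j - 2) < i - 2" and r2: "Suc (i - 2) < n" using assms ji by auto
    have l: "lub_both e n k (Gm e n (j - 2) 0) (Gm e n (i - 2) 0) (Gm e n (j - 2) 0 * Gm e n (i - 2) 0)"
      using comm_lub[OF epos n2 k1 ke r12 r2, of 0] .
    have eq: "Gm e n (j - 2) 0 * Gm e n (i - 2) 0 = Gm e n (i - 2) 0 * Gm e n (j - 2) 0"
      using comm_case(1)[OF epos n2 r12 r2, of 0] .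
    show ?thesis unfolding si sj using lub_both_sym[OF l] eq by simp
  qed
qed

lemma C1: assumes "x \<in> Xgen e n" "y \<in> Xgen e n" "x \<noteq> y"
  shows "\<exists>z. lub_both e n k x y z"
proof -
  from assms(1) consider (t) a where "a < e" "x = tgen e n (int a)" | (s) j where "3 \<le> j" "j \<le> n" "x = sgen n j"
    unfolding Xgen_def by blast
  then show ?thesis
  proof cases
    case t
    from assms(2) consider (t') b where "b < e" "y = tgen e n (int b)" | (s') j where "3 \<le> j" "j \<le> n" "y = sgen n j"
      unfolding Xgen_def by blast
    then show ?thesis
    proof cases
      case t'
      have "int a \<noteq> int b" using t t' assms(3) by auto
      then show ?thesis using C2[of "int a" "int b"] t t' by auto
    next
      case s'
      show ?thesis
      proof (cases "j = 3")
        case True then show ?thesis using C3[of "int a"] t s' by auto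
      next
        case False then show ?thesis using C4[of "int a" j] t s' by auto
      qed
    qed
  next
    case s
    from assms(2) consider (t') b where "b < e" "y = tgen e n (int b)" | (s') j' where "3 \<le> j'" "j' \<le> n" "y = sgen n j'"
      unfolding Xgen_def by blast
    then show ?thesis
    proof cases
      case t'
      show ?thesis
      proof (cases "j = 3")
        case True then show ?thesis using C3[of "int b"] t' s lub_both_sym by fastforce
      next
        case False then show ?thesis using C4[of "int b" j] t' s lub_both_sym by fastforce
      qed
    next
      case s'
      have "j \<noteq> j'" using s s' assms(3) by auto
      then consider "j' = j + 1" | "j = j' + 1" | "j + 1 < j' \<or> j' + 1 < j" by linarith
      then show ?thesis
      proof cases
        case 1
        then have "j \<le> n - 1" using s' by simp
        then show ?thesis using C5[of j] s s' 1 by auto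
      next
        case 2
        then have "j' \<le> n - 1" using s by simp
        then show ?thesis using C5[of j'] s s' 2 lub_both_sym by fastforce
      next
        case 3 then show ?thesis using C6[of j j'] s s' by auto
      qed
    qed
  qed
qed

end


theorem mainTheorem7:
  fixes e n k :: nat
  assumes "2 \<le> e" and "2 \<le> n" and "1 \<le> k" and "k \<le> e - 1"
  shows "(\<forall>x\<in>Xgen e n. \<forall>y\<in>Xgen e n. x \<noteq> y \<longrightarrow> (\<exists>z. lub_both e n k x y z))
    \<and> (\<forall>i j :: int. 0 \<le> i \<and> i < int e \<and> 0 \<le> j \<and> j < int e \<and> i \<noteq> j \<longrightarrow>
          lub_both e n k (tgen e n i) (tgen e n j) (tgen e n (int k) * tgen e n 0)
        \<and> tgen e n (int k) * tgen e n 0 = tgen e n i * tgen e n (i - int k)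
        \<and> tgen e n (int k) * tgen e n 0 = tgen e n j * tgen e n (j - int k))
    \<and> (3 \<le> n \<longrightarrow> (\<forall>i :: int. 0 \<le> i \<and> i < int e \<longrightarrow>
          lub_both e n k (tgen e n i) (sgen n 3) (tgen e n i * sgen n 3 * tgen e n i)
        \<and> tgen e n i * sgen n 3 * tgen e n i = sgen n 3 * tgen e n i * sgen n 3))
    \<and> (\<forall>i :: int. \<forall>j. 0 \<le> i \<and> i < int e \<and> 4 \<le> j \<and> j \<le> n \<longrightarrow>
          lub_both e n k (tgen e n i) (sgen n j) (tgen e n i * sgen n j)
        \<and> tgen e n i * sgen n j = sgen n j * tgen e n i)
    \<and> (\<forall>i. 3 \<le> i \<and> i \<le> n - 1 \<longrightarrow>
          lub_both e n k (sgen n i) (sgen n (i + 1)) (sgen n i * sgen n (i + 1) * sgen n i)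
        \<and> sgen n i * sgen n (i + 1) * sgen n i = sgen n (i + 1) * sgen n i * sgen n (i + 1))
    \<and> (\<forall>i j. 3 \<le> i \<and> i \<le> n \<and> 3 \<le> j \<and> j \<le> n \<and> (i + 1 < j \<or> j + 1 < i) \<longrightarrow>
          lub_both e n k (sgen n i) (sgen n j) (sgen n i * sgen n j)
        \<and> sgen n i * sgen n j = sgen n j * sgen n i)"
proof -
  have epos: "0 < e" and ke: "k < e" using assms by auto
  have n2: "2 \<le> n" and k1: "1 \<le> k" using assms by auto
  show ?thesis
  proof (intro conjI allI impI ballI)
    fix x y assume "x \<in> Xgen e n" "y \<in> Xgen e n" "x \<noteq> y"
    then show "\<exists>z. lub_both e n k x y z" using C1[OF epos n2 k1 ke] by blast
  next
    fix i j :: int assume h: "0 \<le> i \<and> i < int e \<and> 0 \<le> j \<and> j < int e \<and> i \<noteq> j"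
    note c = C2[OF epos n2 k1 ke, of i j]
    show "lub_both e n k (tgen e n i) (tgen e n j) (tgen e n (int k) * tgen e n 0)" using c h by blast
    show "tgen e n (int k) * tgen e n 0 = tgen e n i * tgen e n (i - int k)" using c h by blast
    show "tgen e n (int k) * tgen e n 0 = tgen e n j * tgen e n (j - int k)" using c h by blast
  next
    fix i :: int assume "3 \<le> n" "0 \<le> i \<and> i < int e"
    then show "lub_both e n k (tgen e n i) (sgen n 3) (tgen e n i * sgen n 3 * tgen e n i)"
      "tgen e n i * sgen n 3 * tgen e n i = sgen n 3 * tgen e n i * sgen n 3"
      using C3[OF epos n2 k1 ke] by blast+
  next
    fix i :: int and j assume "0 \<le> i \<and> i < int e \<and> 4 \<le> j \<and> j \<le> n"
    then show "lub_both e n k (tgen e n i) (sgen n j) (tgen e n i * sgen n j)"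
      "tgen e n i * sgen n j = sgen n j * tgen e n i"
      using C4[OF epos n2 k1 ke] by blast+
  next
    fix i assume "3 \<le> i \<and> i \<le> n - 1"
    then show "lub_both e n k (sgen n i) (sgen n (i + 1)) (sgen n i * sgen n (i + 1) * sgen n i)"
      "sgen n i * sgen n (i + 1) * sgen n i = sgen n (i + 1) * sgen n i * sgen n (i + 1)"
      using C5[OF epos n2 k1 ke] by blast+
  next
    fix i j assume "3 \<le> i \<and> i \<le> n \<and> 3 \<le> j \<and> j \<le> n \<and> (i + 1 < j \<or> j + 1 < i)"
    then show "lub_both e n k (sgen n i) (sgen n j) (sgen n i * sgen n j)"
      "sgen n i * sgen n j = sgen n j * sgen n i"
      using C6[OF epos n2 k1 ke] by blast+
  qed
qed


end
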